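(* Let $N$ be a non-negative integer and let the parameters $h_1,h_2,l_1,l_2,\alpha_1,\alpha_2,\beta$ satisfy $h_2=l_2-1-N$. Put $\lambda_1=(h_1+h_2-l_1-l_2-\alpha_1-\alpha_2-\beta+2)/2$ and $\lambda_2=\lambda_1+\beta$, and assume $\lambda_2+\alpha_1>1$ and $\lambda_1+\alpha_2>1$ (real). Let $c_k(E)$ and $c(E)$ be the polynomials defined in the context and let $E_0$ satisfy $c(E_0)=0$. Let $\xi\neq0$ be independent of $x$ or proportional to $x$, chosen (together with $x$) so that no denominator below vanishes. Then the series $$g_1(x)=(1-q)x^{-\alpha_1}\frac{(q^{-l_1+1/2}\xi/t_1,\ q^{\lambda_1+\alpha_1}\xi/x;q)_\infty}{(q^{\lambda_1-h_1+\alpha_1-1/2}\xi/t_1,\ \xi/x;q)_\infty}\sum_{n=-\infty}^{\infty}\frac{(q^{\lambda_1-h_1+\alpha_1-1/2}\xi/t_1,\ \xi/x;q)_n}{(q^{-l_1+1/2}\xi/t_1,\ q^{\lambda_1+\alpha_1}\xi/x;q)_n}\sum_{k=0}^{N}q^{(\lambda_1+\alpha_1+\beta+k)n}\xi^{\lambda_1+\alpha_1+\beta+k}c_k(E_0),$$ $$g_2(x)=(1-q)x^{\lambda_1}\frac{(q^{-\lambda_1+h_1-\alpha_1+3/2}t_1/\xi,\ qx/\xi;q)_\infty}{(q^{l_1+1/2}t_1/\xi,\ q^{-\lambda_1-\alpha_1+1}x/\xi;q)_\infty}\sum_{n=-\infty}^{\infty}\frac{(q^{l_1+1/2}t_1/\xi,\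 q^{-\lambda_1-\alpha_1+1}x/\xi;q)_n}{(q^{-\lambda_1+h_1-\alpha_1+3/2}t_1/\xi,\ qx/\xi;q)_n}\sum_{k=0}^{N}q^{(\lambda_1+\alpha_2+N-k)n}\xi^{-\lambda_1-\alpha_2-N+k}c_k(E_0)$$ converge and satisfy $A^{\langle4\rangle}(x;h_1,h_2,l_1,l_2,\alpha_1,\alpha_2,\beta)g_i(x)=E_0g_i(x)$ for $i=1,2$.
   Context: $q\in\mathbb{C}$ with $0<|q|<1$; powers $q^{a}$ via a fixed branch of $\log q$ (for real $a$, $|q^a|=|q|^a$); $x^a,\xi^a$ fixed branches. $(a;q)_\infty=\prod_{k\ge0}(1-aq^k)$, $(a;q)_n=(a;q)_\infty/(aq^n;q)_\infty$ ($n\in\mathbb{Z}$), $(a_1,\dots,a_m;q)_n=\prod_i(a_i;q)_n$. $t_1,t_2$ fixed non-zero; $T_x^{\pm1}g(x)=g(q^{\pm1}x)$; $A^{\langle 4\rangle}(x;h_1,h_2,l_1,l_2,\alpha_1,\alpha_2,\beta)=x^{-1}(x-q^{h_1+1/2}t_1)(x-q^{h_2+1/2}t_2)T_x^{-1}+q^{\alpha_1+\alpha_2}x^{-1}(x-q^{l_1-1/2}t_1)(x-q^{l_2-1/2}t_2)T_x-\{(q^{\alpha_1}+q^{\alpha_2})x+q^{(h_1+h_2+l_1+l_2+\alpha_1+\alpha_2)/2}(q^{\beta/2}+q^{-\beta/2})t_1t_2x^{-1}\}$. Polynomials: for $n\ge1$ set $x_n=t_1t_2q^{-n+l_1+l_2+\alpha_2}(1-q^{n})(1-q^{n-1+\alpha_1+\lambda_1+\beta})$,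 $y_n=(q^{1-n-\beta}+q^{n-1-N})q^{-\lambda_1+h_1+1/2}t_1+(q^{1-n+\alpha_2}+q^{n-1-N+\alpha_1})q^{l_2-1/2}t_2$, $z_n=q^{n-N-2+\alpha_1}(1-q^{N-n+1+\alpha_2+\lambda_1})(1-q^{N-n+2})$. Set $c_{-1}(E)=0$, $c_0(E)=1$, $c_n(E)x_n=c_{n-1}(E)(E+y_n)-c_{n-2}(E)z_n$ for $n=1,\dots,N$, and $c(E)=x_1\cdots x_N[c_N(E)(E+y_{N+1})-c_{N-1}(E)z_{N+1}]$. *)

theory Defs
  imports "HOL-Analysis.Analysis"
begin

text \<open>Non-integer powers of q via a fixed logarithm Lq of q (q = exp Lq):
  q^a = exp (a * Lq).\<close>
definition qpw :: "complex \<Rightarrow> complex \<Rightarrow> complex" where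
  "qpw Lq a = exp (a * Lq)"

definition qpinf :: "complex \<Rightarrow> complex \<Rightarrow> complex" where
  "qpinf q a = (\<Prod>k. 1 - a * q ^ k)"

definition qpoch :: "complex \<Rightarrow> complex \<Rightarrow> int \<Rightarrow> complex" where
  "qpoch q a n = qpinf q a / qpinf q (a * q powi n)"

definition bilat_summable :: "(int \<Rightarrow> complex) \<Rightarrow> bool" where
  "bilat_summable f \<longleftrightarrow> summable (\<lambda>n. f (int n)) \<and> summable (\<lambda>n. f (- int (Suc n)))"

definition bilat_sum :: "(int \<Rightarrow> complex) \<Rightarrow> complex" where
  "bilat_sum f = (\<Sum>n. f (int n)) + (\<Sum>n. f (- int (Suc n)))"

definition xc :: "complex \<Rightarrow> complex \<Rightarrow> complex \<Rightarrow> complex \<Rightarrow> complex \<Rightarrow> complex \<Rightarrow> complex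
    \<Rightarrow> complex \<Rightarrow> complex \<Rightarrow> complex \<Rightarrow> nat \<Rightarrow> nat \<Rightarrow> complex" where
  "xc Lq t1 t2 h1 l1 l2 a1 a2 b lam1 N n =
     t1 * t2 * qpw Lq (- of_nat n + l1 + l2 + a2) * (1 - qpw Lq (of_nat n))
       * (1 - qpw Lq (of_nat n - 1 + a1 + lam1 + b))"

definition yc :: "complex \<Rightarrow> complex \<Rightarrow> complex \<Rightarrow> complex \<Rightarrow> complex \<Rightarrow> complex \<Rightarrow> complex
    \<Rightarrow> complex \<Rightarrow> complex \<Rightarrow> complex \<Rightarrow> nat \<Rightarrow> nat \<Rightarrow> complex" where
  "yc Lq t1 t2 h1 l1 l2 a1 a2 b lam1 N n =
     (qpw Lq (1 - of_nat n - b) + qpw Lq (of_nat n - 1 - of_nat N)) * qpw Lq (- lam1 + h1 + 1/2) * t1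
   + (qpw Lq (1 - of_nat n + a2) + qpw Lq (of_nat n - 1 - of_nat N + a1)) * qpw Lq (l2 - 1/2) * t2"

definition zc :: "complex \<Rightarrow> complex \<Rightarrow> complex \<Rightarrow> complex \<Rightarrow> complex \<Rightarrow> complex \<Rightarrow> complex
    \<Rightarrow> complex \<Rightarrow> complex \<Rightarrow> complex \<Rightarrow> nat \<Rightarrow> nat \<Rightarrow> complex" where
  "zc Lq t1 t2 h1 l1 l2 a1 a2 b lam1 N n =
     qpw Lq (of_nat n - of_nat N - 2 + a1) * (1 - qpw Lq (of_nat N - of_nat n + 1 + a2 + lam1))
       * (1 - qpw Lq (of_nat N - of_nat n + 2))"

text \<open>c_n(E): c_{-1}=0, c_0=1, c_n x_n = c_{n-1}(E+y_n) - c_{n-2} z_n.\<close>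
fun cseq :: "complex \<Rightarrow> complex \<Rightarrow> complex \<Rightarrow> complex \<Rightarrow> complex \<Rightarrow> complex \<Rightarrow> complex
    \<Rightarrow> complex \<Rightarrow> complex \<Rightarrow> complex \<Rightarrow> nat \<Rightarrow> complex \<Rightarrow> nat \<Rightarrow> complex" where
  "cseq Lq t1 t2 h1 l1 l2 a1 a2 b lam1 N E 0 = 1"
| "cseq Lq t1 t2 h1 l1 l2 a1 a2 b lam1 N E (Suc 0) =
     (E + yc Lq t1 t2 h1 l1 l2 a1 a2 b lam1 N 1) / xc Lq t1 t2 h1 l1 l2 a1 a2 b lam1 N 1"
| "cseq Lq t1 t2 h1 l1 l2 a1 a2 b lam1 N E (Suc (Suc n)) =
     (cseq Lq t1 t2 h1 l1 l2 a1 a2 b lam1 N E (Suc n) * (E + yc Lq t1 t2 h1 l1 l2 a1 a2 b lam1 N (n + 2))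
      - cseq Lq t1 t2 h1 l1 l2 a1 a2 b lam1 N E n * zc Lq t1 t2 h1 l1 l2 a1 a2 b lam1 N (n + 2))
     / xc Lq t1 t2 h1 l1 l2 a1 a2 b lam1 N (n + 2)"

definition cpoly :: "complex \<Rightarrow> complex \<Rightarrow> complex \<Rightarrow> complex \<Rightarrow> complex \<Rightarrow> complex \<Rightarrow> complex
    \<Rightarrow> complex \<Rightarrow> complex \<Rightarrow> complex \<Rightarrow> nat \<Rightarrow> complex \<Rightarrow> complex" where
  "cpoly Lq t1 t2 h1 l1 l2 a1 a2 b lam1 N E =
     (\<Prod>i=1..N. xc Lq t1 t2 h1 l1 l2 a1 a2 b lam1 N i)
     * (cseq Lq t1 t2 h1 l1 l2 a1 a2 b lam1 N E N * (E + yc Lq t1 t2 h1 l1 l2 a1 a2 b lam1 N (N + 1))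
        - (if N = 0 then 0 else cseq Lq t1 t2 h1 l1 l2 a1 a2 b lam1 N E (N - 1))
          * zc Lq t1 t2 h1 l1 l2 a1 a2 b lam1 N (N + 1))"

text \<open>Functions are written in the logarithmic variable u with x = exp u (fixed branch
  of log x), so x^a = exp (a*u) and T_x^{+-1} is u |-> u +- Lq.  Similarly
  xi = exp (Lxi u), xi^a = exp (a * Lxi u).\<close>

definition A4 :: "complex \<Rightarrow> complex \<Rightarrow> complex \<Rightarrow> complex \<Rightarrow> complex \<Rightarrow> complex \<Rightarrow> complex
    \<Rightarrow> complex \<Rightarrow> complex \<Rightarrow> complex \<Rightarrow> (complex \<Rightarrow> complex) \<Rightarrow> complex \<Rightarrow> complex" where
  "A4 Lq t1 t2 h1 h2 l1 l2 a1 a2 b g u =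
     (let x = exp u in
        (x - qpw Lq (h1 + 1/2) * t1) * (x - qpw Lq (h2 + 1/2) * t2) / x * g (u - Lq)
      + qpw Lq (a1 + a2) * (x - qpw Lq (l1 - 1/2) * t1) * (x - qpw Lq (l2 - 1/2) * t2) / x * g (u + Lq)
      - ((qpw Lq a1 + qpw Lq a2) * x
         + qpw Lq ((h1 + h2 + l1 + l2 + a1 + a2) / 2) * (qpw Lq (b/2) + qpw Lq (- b/2)) * t1 * t2 / x)
        * g u)"

definition g1_term :: "complex \<Rightarrow> complex \<Rightarrow> complex \<Rightarrow> complex \<Rightarrow> complex \<Rightarrow> complex \<Rightarrow> complex
    \<Rightarrow> complex \<Rightarrow> complex \<Rightarrow> complex \<Rightarrow> nat \<Rightarrow> (complex \<Rightarrow> complex) \<Rightarrow> complex \<Rightarrow> complex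
    \<Rightarrow> int \<Rightarrow> complex" where
  "g1_term Lq t1 t2 h1 l1 l2 a1 a2 b lam1 N Lxi E u n =
     (let q = exp Lq; x = exp u; xi = exp (Lxi u);
          A1 = qpw Lq (- l1 + 1/2) * xi / t1; A2 = qpw Lq (lam1 + a1) * xi / x;
          B1 = qpw Lq (lam1 - h1 + a1 - 1/2) * xi / t1; B2 = xi / x
      in qpoch q B1 n * qpoch q B2 n / (qpoch q A1 n * qpoch q A2 n)
         * (\<Sum>k=0..N. qpw Lq ((lam1 + a1 + b + of_nat k) * of_int n)
                       * exp ((lam1 + a1 + b + of_nat k) * Lxi u)
                       * cseq Lq t1 t2 h1 l1 l2 a1 a2 b lam1 N E k))"

definition g1 :: "complex \<Rightarrow> complex \<Rightarrow> complex \<Rightarrow> complex \<Rightarrow> complex \<Rightarrow> complex \<Rightarrow> complex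
    \<Rightarrow> complex \<Rightarrow> complex \<Rightarrow> complex \<Rightarrow> nat \<Rightarrow> (complex \<Rightarrow> complex) \<Rightarrow> complex \<Rightarrow> complex
    \<Rightarrow> complex" where
  "g1 Lq t1 t2 h1 l1 l2 a1 a2 b lam1 N Lxi E u =
     (let q = exp Lq; x = exp u; xi = exp (Lxi u);
          A1 = qpw Lq (- l1 + 1/2) * xi / t1; A2 = qpw Lq (lam1 + a1) * xi / x;
          B1 = qpw Lq (lam1 - h1 + a1 - 1/2) * xi / t1; B2 = xi / x
      in (1 - q) * exp (- a1 * u) * (qpinf q A1 * qpinf q A2) / (qpinf q B1 * qpinf q B2)
         * bilat_sum (g1_term Lq t1 t2 h1 l1 l2 a1 a2 b lam1 N Lxi E u))"

definition g2_term :: "complex \<Rightarrow> complex \<Rightarrow> complex \<Rightarrow> complex \<Rightarrow> complex \<Rightarrow> complex \<Rightarrow> complex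
    \<Rightarrow> complex \<Rightarrow> complex \<Rightarrow> complex \<Rightarrow> nat \<Rightarrow> (complex \<Rightarrow> complex) \<Rightarrow> complex \<Rightarrow> complex
    \<Rightarrow> int \<Rightarrow> complex" where
  "g2_term Lq t1 t2 h1 l1 l2 a1 a2 b lam1 N Lxi E u n =
     (let q = exp Lq; x = exp u; xi = exp (Lxi u);
          C1 = qpw Lq (- lam1 + h1 - a1 + 3/2) * t1 / xi; C2 = q * x / xi;
          D1 = qpw Lq (l1 + 1/2) * t1 / xi; D2 = qpw Lq (- lam1 - a1 + 1) * x / xi
      in qpoch q D1 n * qpoch q D2 n / (qpoch q C1 n * qpoch q C2 n)
         * (\<Sum>k=0..N. qpw Lq ((lam1 + a2 + of_nat N - of_nat k) * of_int n)
                       * exp ((- lam1 - a2 - of_nat N + of_nat k) * Lxi u)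
                       * cseq Lq t1 t2 h1 l1 l2 a1 a2 b lam1 N E k))"

definition g2 :: "complex \<Rightarrow> complex \<Rightarrow> complex \<Rightarrow> complex \<Rightarrow> complex \<Rightarrow> complex \<Rightarrow> complex
    \<Rightarrow> complex \<Rightarrow> complex \<Rightarrow> complex \<Rightarrow> nat \<Rightarrow> (complex \<Rightarrow> complex) \<Rightarrow> complex \<Rightarrow> complex
    \<Rightarrow> complex" where
  "g2 Lq t1 t2 h1 l1 l2 a1 a2 b lam1 N Lxi E u =
     (let q = exp Lq; x = exp u; xi = exp (Lxi u);
          C1 = qpw Lq (- lam1 + h1 - a1 + 3/2) * t1 / xi; C2 = q * x / xi;
          D1 = qpw Lq (l1 + 1/2) * t1 / xi; D2 = qpw Lq (- lam1 - a1 + 1) * x / xi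
      in (1 - q) * exp (lam1 * u) * (qpinf q C1 * qpinf q C2) / (qpinf q D1 * qpinf q D2)
         * bilat_sum (g2_term Lq t1 t2 h1 l1 l2 a1 a2 b lam1 N Lxi E u))"

text \<open>No q-Pochhammer symbol with argument a (finite, infinite, any integer index)
  has a vanishing factor: a q^m \<noteq> 1 for all integers m.\<close>
definition qgeneric :: "complex \<Rightarrow> complex \<Rightarrow> bool" where
  "qgeneric q a \<longleftrightarrow> (\<forall>m::int. a * q powi m \<noteq> 1)"

end

theory Submission
  imports Defs
begin

lemma qpinf_conv:
  fixes q a :: complex assumes "norm q < 1"
  shows "convergent_prod (\<lambda>k. 1 - a * q ^ k)"
proof -
  have "summable (\<lambda>k. norm a * norm q ^ k)"
    using assms by (intro summable_mult summable_geometric) simp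
  then have "summable (\<lambda>k. norm ((1 - a * q ^ k) - 1))"
    by (simp add: norm_mult norm_power)
  then show ?thesis
    by (intro abs_convergent_prod_imp_convergent_prod summable_imp_abs_convergent_prod)
qed

lemma qpinf_split:
  fixes q a :: complex assumes "norm q < 1"
  shows "qpinf q a = (\<Prod>k<n. 1 - a * q ^ k) * qpinf q (a * q ^ n)"
proof -
  have "(\<lambda>k. 1 - a * q ^ k) has_prod ((\<Prod>k<n. 1 - a * q ^ k) * (\<Prod>k. 1 - a * q ^ (k + n)))"
    by (rule has_prod_ignore_initial_segment'[OF qpinf_conv[OF assms]])
  then show ?thesis unfolding qpinf_def
    by (simp add: has_prod_unique[symmetric] power_add mult_ac)
qed

lemma qpinf_Suc:
  fixes q a :: complex assumes "norm q < 1"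
  shows "qpinf q a = (1 - a) * qpinf q (a * q)"
  using qpinf_split[OF assms, of a 1] by simp

lemma qpinf_nz:
  fixes q a :: complex assumes "norm q < 1" "\<And>k::nat. a * q ^ k \<noteq> 1"
  shows "qpinf q a \<noteq> 0"
  unfolding qpinf_def using assms by (intro prodinf_nonzero qpinf_conv) auto

lemma qpinf_partial_tendsto:
  fixes q a :: complex assumes "norm q < 1"
  shows "(\<lambda>n. \<Prod>k<n. 1 - a * q ^ k) \<longlonglongrightarrow> qpinf q a"
proof -
  have "(\<lambda>n. \<Prod>k\<le>n. 1 - a * q ^ k) \<longlonglongrightarrow> qpinf q a"
    unfolding qpinf_def by (rule convergent_prod_LIMSEQ[OF qpinf_conv[OF assms]])
  then have "(\<lambda>n. \<Prod>k<Suc n. 1 - a * q ^ k) \<longlonglongrightarrow> qpinf q a"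
    by (simp add: lessThan_Suc_atMost)
  then show ?thesis using filterlim_sequentially_Suc[of "\<lambda>n. \<Prod>k<n. 1 - a * q ^ k"] by simp
qed

lemma qgeneric_nat: "qgeneric q a \<Longrightarrow> a * q ^ k \<noteq> 1"
  unfolding qgeneric_def by (metis power_int_of_nat)

lemma qpinf_nz_gen: "norm q < 1 \<Longrightarrow> qgeneric q a \<Longrightarrow> qpinf q a \<noteq> 0"
  by (rule qpinf_nz) (auto dest: qgeneric_nat)

lemma qgeneric_neg: "qgeneric q a \<Longrightarrow> a / q ^ k \<noteq> 1"
  unfolding qgeneric_def
  by (metis power_int_minus power_int_of_nat divide_inverse)

lemma ratio_pos_Bseq:
  fixes q A B :: complex
  assumes q: "norm q < 1" and gA: "qgeneric q A" and gB: "qgeneric q B"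
  shows "Bseq (\<lambda>n. qpinf q (A * q ^ n) / qpinf q (B * q ^ n))"
proof -
  define pA where "pA n = (\<Prod>k<n. 1 - A * q ^ k)" for n
  define pB where "pB n = (\<Prod>k<n. 1 - B * q ^ k)" for n
  have nzA: "qpinf q A \<noteq> 0" and nzB: "qpinf q B \<noteq> 0"
    using qpinf_nz_gen[OF q gA] qpinf_nz_gen[OF q gB] by auto
  have pAnz: "pA n \<noteq> 0" for n
    unfolding pA_def using gA qgeneric_nat by (auto simp: prod_zero_iff)
  have eq: "qpinf q (A * q ^ n) / qpinf q (B * q ^ n) = qpinf q A / qpinf q B * (pB n / pA n)" for n
  proof -
    have "qpinf q A = pA n * qpinf q (A * q ^ n)" "qpinf q B = pB n * qpinf q (B * q ^ n)"
      unfolding pA_def pB_def by (rule qpinf_split[OF q])+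
    then show ?thesis using pAnz[of n] nzB by (auto simp: field_simps)
  qed
  have "(\<lambda>n. qpinf q A / qpinf q B * (pB n / pA n)) \<longlonglongrightarrow> qpinf q A / qpinf q B * (qpinf q B / qpinf q A)"
    unfolding pA_def pB_def
    by (intro tendsto_intros qpinf_partial_tendsto q nzA)
  then have "convergent (\<lambda>n. qpinf q (A * q ^ n) / qpinf q (B * q ^ n))"
    by (auto simp: eq convergent_def)
  then show ?thesis by (rule convergent_imp_Bseq)
qed

lemma qpinf_neg:
  fixes q A :: complex
  assumes q: "norm q < 1" "q \<noteq> 0"
  shows "qpinf q (A / q ^ n) = (\<Prod>j<n. 1 - A / q ^ Suc j) * qpinf q A"
proof (induction n)
  case 0 then show ?case by simp
next
  case (Suc n)
  have "qpinf q (A / q ^ Suc n) = (1 - A / q ^ Suc n) * qpinf q (A / q ^ Suc n * q)"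
    by (rule qpinf_Suc[OF q(1)])
  also have "A / q ^ Suc n * q = A / q ^ n" using q(2) by (simp add: field_simps)
  finally show ?case using Suc by (simp add: mult_ac)
qed

lemma ratio_neg_Bseq:
  fixes q A B :: complex
  assumes q: "norm q < 1" "q \<noteq> 0" and gA: "qgeneric q A" and gB: "qgeneric q B"
    and nz: "A \<noteq> 0" "B \<noteq> 0"
  shows "Bseq (\<lambda>n. qpinf q (A / q ^ n) / qpinf q (B / q ^ n) / (A / B) ^ n)"
proof -
  have nzB: "qpinf q B \<noteq> 0"
    using qpinf_nz_gen[OF q(1) gB] by auto
  have nzB': "qpinf q (q / B) \<noteq> 0"
  proof (rule qpinf_nz[OF q(1)])
    fix k :: nat
    have "B / q ^ Suc k \<noteq> 1" by (rule qgeneric_neg[OF gB])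
    then show "q / B * q ^ k \<noteq> 1" using nz q(2) by (auto simp: field_simps)
  qed
  have fac: "(1 - A / q ^ Suc j) / (1 - B / q ^ Suc j) = (A / B) * ((1 - (q / A) * q ^ j) / (1 - (q / B) * q ^ j))" for j
  proof -
    have "B / q ^ Suc j \<noteq> 1" by (rule qgeneric_neg[OF gB])
    then have "q ^ Suc j \<noteq> B" using q(2) by auto
    then have d: "1 - (q / B) * q ^ j \<noteq> 0" using nz by (auto simp: field_simps)
    have "q ^ Suc j \<noteq> 0" using q(2) by simp
    then show ?thesis using d nz q(2) by (simp add: field_simps)
  qed
  have eq: "qpinf q (A / q ^ n) / qpinf q (B / q ^ n) / (A / B) ^ n
     = qpinf q A / qpinf q B * ((\<Prod>j<n. 1 - (q / A) * q ^ j) / (\<Prod>j<n. 1 - (q / B) * q ^ j))" for n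
  proof -
    have "qpinf q (A / q ^ n) / qpinf q (B / q ^ n)
        = qpinf q A / qpinf q B * (\<Prod>j<n. (1 - A / q ^ Suc j) / (1 - B / q ^ Suc j))"
      by (simp add: qpinf_neg[OF q] prod_dividef mult_ac)
    also have "\<dots> = qpinf q A / qpinf q B * ((A / B) ^ n * (\<Prod>j<n. (1 - (q / A) * q ^ j) / (1 - (q / B) * q ^ j)))"
      unfolding fac prod.distrib by simp
    finally show ?thesis using nz by (simp add: prod_dividef)
  qed
  have "(\<lambda>n. qpinf q A / qpinf q B * ((\<Prod>j<n. 1 - (q / A) * q ^ j) / (\<Prod>j<n. 1 - (q / B) * q ^ j)))
     \<longlonglongrightarrow> qpinf q A / qpinf q B * (qpinf q (q / A) / qpinf q (q / B))"
    by (intro tendsto_intros qpinf_partial_tendsto q nzB')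
  then have "convergent (\<lambda>n. qpinf q (A / q ^ n) / qpinf q (B / q ^ n) / (A / B) ^ n)"
    unfolding convergent_def eq by blast
  then show ?thesis by (rule convergent_imp_Bseq)
qed

definition R4 :: "complex \<Rightarrow> complex \<Rightarrow> complex \<Rightarrow> complex \<Rightarrow> complex \<Rightarrow> int \<Rightarrow> complex" where
  "R4 q A1 A2 B1 B2 n = qpinf q (A1 * q powi n) * qpinf q (A2 * q powi n)
      / (qpinf q (B1 * q powi n) * qpinf q (B2 * q powi n))"

lemma gen_bilat:
  fixes q A1 A2 B1 B2 z :: complex
  assumes q: "norm q < 1" "q \<noteq> 0"
    and g: "qgeneric q A1" "qgeneric q A2" "qgeneric q B1" "qgeneric q B2"
    and nz: "A1 \<noteq> 0" "A2 \<noteq> 0" "B1 \<noteq> 0" "B2 \<noteq> 0"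
    and z: "z \<noteq> 0" "norm z < 1" "norm (A1 * A2 / (B1 * B2) / z) < 1"
  shows "bilat_summable (\<lambda>n. R4 q A1 A2 B1 B2 n * z powi n)"
proof -
  obtain K1 where K1: "K1 > 0" "\<And>n. norm (qpinf q (A1 * q ^ n) / qpinf q (B1 * q ^ n)) \<le> K1"
    using ratio_pos_Bseq[OF q(1) g(1) g(3)] by (auto elim: BseqE)
  obtain K2 where K2: "K2 > 0" "\<And>n. norm (qpinf q (A2 * q ^ n) / qpinf q (B2 * q ^ n)) \<le> K2"
    using ratio_pos_Bseq[OF q(1) g(2) g(4)] by (auto elim: BseqE)
  obtain M1 where M1: "M1 > 0" "\<And>n. norm (qpinf q (A1 / q ^ n) / qpinf q (B1 / q ^ n) / (A1 / B1) ^ n) \<le> M1"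
    using ratio_neg_Bseq[OF q g(1) g(3) nz(1) nz(3)] by (auto elim: BseqE)
  obtain M2 where M2: "M2 > 0" "\<And>n. norm (qpinf q (A2 / q ^ n) / qpinf q (B2 / q ^ n) / (A2 / B2) ^ n) \<le> M2"
    using ratio_neg_Bseq[OF q g(2) g(4) nz(2) nz(4)] by (auto elim: BseqE)
  have pos: "summable (\<lambda>n. R4 q A1 A2 B1 B2 (int n) * z powi (int n))"
  proof (rule summable_comparison_test')
    show "summable (\<lambda>n. K1 * K2 * norm z ^ n)"
      using z by (intro summable_mult summable_geometric) simp
    fix n :: nat
    have "R4 q A1 A2 B1 B2 (int n) * z powi (int n)
       = (qpinf q (A1 * q ^ n) / qpinf q (B1 * q ^ n)) * (qpinf q (A2 * q ^ n) / qpinf q (B2 * q ^ n)) * z ^ n"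
      by (simp add: R4_def power_int_of_nat)
    also have "norm \<dots> \<le> K1 * K2 * norm z ^ n"
      unfolding norm_mult norm_power
      by (intro mult_mono K1 K2 order.refl) (use K1 K2 in auto)
    finally show "norm (R4 q A1 A2 B1 B2 (int n) * z powi (int n)) \<le> K1 * K2 * norm z ^ n" .
  qed
  have neg: "summable (\<lambda>n. R4 q A1 A2 B1 B2 (- int (Suc n)) * z powi (- int (Suc n)))"
  proof (rule summable_comparison_test')
    define \<rho> where "\<rho> = norm (A1 * A2 / (B1 * B2) / z)"
    show "summable (\<lambda>n. M1 * M2 * \<rho> ^ Suc n)"
      using z unfolding \<rho>_def by (intro summable_mult summable_geometric summable_Suc_iff[THEN iffD2]) simp
    fix n :: nat
    define k where "k = Suc n"
    have "R4 q A1 A2 B1 B2 (- int (Suc n)) * z powi (- int (Suc n))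
       = (qpinf q (A1 / q ^ k) / qpinf q (B1 / q ^ k) / (A1 / B1) ^ k)
         * (qpinf q (A2 / q ^ k) / qpinf q (B2 / q ^ k) / (A2 / B2) ^ k)
         * (A1 * A2 / (B1 * B2) / z) ^ k"
    proof -
      have e: "A * q powi (- int (Suc n)) = A / q ^ k" for A
        unfolding k_def by (simp add: power_int_minus power_int_of_nat divide_inverse del: of_nat_Suc)
      have ez: "z powi (- int (Suc n)) = 1 / z ^ k"
        unfolding k_def by (simp add: power_int_minus power_int_of_nat divide_inverse del: of_nat_Suc)
      have "(A1 * A2 / (B1 * B2) / z) ^ k = A1 ^ k * A2 ^ k / (B1 ^ k * B2 ^ k * z ^ k)"
        by (simp add: power_mult_distrib power_divide)
      then show ?thesis unfolding R4_def e ez using nz z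
        by (simp add: power_divide)
    qed
    also have "norm \<dots> \<le> M1 * M2 * \<rho> ^ k"
      unfolding norm_mult norm_power \<rho>_def
      by (intro mult_mono M1 M2 order.refl) (use M1 M2 in auto)
    finally show "norm (R4 q A1 A2 B1 B2 (- int (Suc n)) * z powi (- int (Suc n))) \<le> M1 * M2 * \<rho> ^ Suc n"
      by (simp add: k_def)
  qed
  show ?thesis unfolding bilat_summable_def using pos neg by simp
qed

lemma bs_add:
  assumes "bilat_summable f" "bilat_summable g"
  shows "bilat_summable (\<lambda>n. f n + g n)" "bilat_sum (\<lambda>n. f n + g n) = bilat_sum f + bilat_sum g"
proof -
  show "bilat_summable (\<lambda>n. f n + g n)" using assms by (auto simp: bilat_summable_def intro: summable_add)
  have "(\<Sum>n. f (int n) + g (int n)) = (\<Sum>n. f (int n)) + (\<Sum>n. g (int n))"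
       "(\<Sum>n. f (- int (Suc n)) + g (- int (Suc n))) = (\<Sum>n. f (- int (Suc n))) + (\<Sum>n. g (- int (Suc n)))"
    using assms by (auto simp: bilat_summable_def intro!: suminf_add[symmetric])
  then show "bilat_sum (\<lambda>n. f n + g n) = bilat_sum f + bilat_sum g"
    unfolding bilat_sum_def by (simp add: algebra_simps)
qed

lemma bs_cmult:
  assumes "bilat_summable f"
  shows "bilat_summable (\<lambda>n. c * f n)" "bilat_sum (\<lambda>n. c * f n) = c * bilat_sum f"
  using assms by (auto simp: bilat_summable_def bilat_sum_def suminf_mult distrib_left intro: summable_mult)

lemma bs_zero: "bilat_summable (\<lambda>n. 0)" "bilat_sum (\<lambda>n. 0) = 0"
  by (auto simp: bilat_summable_def bilat_sum_def)

lemma bs_sum: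
  assumes "\<And>k. k \<in> K \<Longrightarrow> bilat_summable (f k)"
  shows "bilat_summable (\<lambda>n. \<Sum>k\<in>K. f k n) \<and> bilat_sum (\<lambda>n. \<Sum>k\<in>K. f k n) = (\<Sum>k\<in>K. bilat_sum (f k))"
  using assms
proof (induction K rule: infinite_finite_induct)
  case (infinite A) then show ?case by (simp add: bs_zero)
next
  case empty then show ?case by (simp add: bs_zero)
next
  case (insert x F)
  then have "bilat_summable (\<lambda>n. \<Sum>k\<in>F. f k n)" "bilat_sum (\<lambda>n. \<Sum>k\<in>F. f k n) = (\<Sum>k\<in>F. bilat_sum (f k))"
    "bilat_summable (f x)" by auto
  then show ?case using insert bs_add[of "f x" "\<lambda>n. \<Sum>k\<in>F. f k n"] by simp
qed

lemma bs_shift_iff: "bilat_summable (\<lambda>n. f (n + 1)) \<longleftrightarrow> bilat_summable f"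
proof -
  have a: "(\<lambda>n. f (int n + 1)) = (\<lambda>n. f (int (Suc n)))" by (rule ext) (simp add: add.commute)
  have b: "(\<lambda>n. f (- int (Suc n) + 1)) = (\<lambda>n. f (- int n))" by auto
  have c: "summable (\<lambda>n. f (- int n)) \<longleftrightarrow> summable (\<lambda>n. f (- int (Suc n)))"
    using summable_Suc_iff[of "\<lambda>n. f (- int n)"] by simp
  show ?thesis unfolding bilat_summable_def a b c
    using summable_Suc_iff[of "\<lambda>n. f (int n)"] by simp
qed

lemma bs_shift_sum:
  assumes "bilat_summable f"
  shows "bilat_sum (\<lambda>n. f (n + 1)) = bilat_sum f"
proof -
  have a: "(\<lambda>n. f (int n + 1)) = (\<lambda>n. f (int (Suc n)))" by (rule ext) (simp add: add.commute)
  have b: "(\<lambda>n. f (- int (Suc n) + 1)) = (\<lambda>n. f (- int n))" by auto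
  have s1: "summable (\<lambda>n. f (int n))" and s2: "summable (\<lambda>n. f (- int (Suc n)))"
    using assms by (auto simp: bilat_summable_def)
  have s3: "summable (\<lambda>n. f (- int n))"
    using s2 summable_Suc_iff[of "\<lambda>n. f (- int n)"] by simp
  have e1: "(\<Sum>n. f (int (Suc n))) = (\<Sum>n. f (int n)) - f 0"
    using suminf_split_head[OF s1] by simp
  have e2: "(\<Sum>n. f (- int (Suc n))) = (\<Sum>n. f (- int n)) - f 0"
    using suminf_split_head[OF s3] by simp
  show ?thesis unfolding bilat_sum_def a b e1 e2 by simp
qed

lemma bs_shift_minus:
  assumes "bilat_summable f"
  shows "bilat_summable (\<lambda>n. f (n - 1))" "bilat_sum (\<lambda>n. f (n - 1)) = bilat_sum f"
proof -
  have "bilat_summable (\<lambda>n. f (n + 1 - 1))" using assms by simp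
  then show s: "bilat_summable (\<lambda>n. f (n - 1))" using bs_shift_iff[of "\<lambda>n. f (n - 1)"] by simp
  show "bilat_sum (\<lambda>n. f (n - 1)) = bilat_sum f"
    using bs_shift_sum[OF s] by simp
qed

lemma bs_shift_plus:
  assumes "bilat_summable f"
  shows "bilat_summable (\<lambda>n. f (n + 1))" "bilat_sum (\<lambda>n. f (n + 1)) = bilat_sum f"
  using assms bs_shift_iff bs_shift_sum by auto

lemma bs_telescope:
  assumes f: "\<And>n. f n = H n - H (n + 1)"
    and t1: "(\<lambda>n. H (int n)) \<longlonglongrightarrow> 0" and t2: "(\<lambda>n. H (- int n)) \<longlonglongrightarrow> 0"
  shows "bilat_summable f" "bilat_sum f = 0"
proof -
  have "(\<lambda>n. H (int (Suc n)) - H (int n)) sums (0 - H (int 0))"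
    by (rule telescope_sums[OF t1])
  then have "(\<lambda>n. - (H (int (Suc n)) - H (int n))) sums (- (0 - H 0))"
    by (intro sums_minus) simp
  then have p: "(\<lambda>n. f (int n)) sums H 0" by (simp add: f add_ac)
  have "(\<lambda>n. H (- int (Suc n)) - H (- int n)) sums (0 - H (- int 0))"
    by (rule telescope_sums[OF t2])
  then have m: "(\<lambda>n. f (- int (Suc n))) sums (- H 0)" by (simp add: f)
  show "bilat_summable f" using p m by (auto simp: bilat_summable_def sums_summable)
  show "bilat_sum f = 0" using p m by (simp add: bilat_sum_def sums_iff)
qed

lemma exp_int_mult: "exp (of_int n * x) = exp (x::complex) powi n"
proof (cases "n \<ge> 0")
  case True
  then obtain m where "n = int m" by (intro that[of "nat n"]) simp
  then show ?thesis by (simp add: exp_of_nat_mult power_int_of_nat)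
next
  case False
  then obtain m where "n = - int m" by (intro that[of "nat (- n)"]) simp
  then show ?thesis by (simp add: exp_of_nat_mult power_int_minus power_int_of_nat exp_minus)
qed

lemma qpw_add: "qpw Lq (a + b) = qpw Lq a * qpw Lq b"
  by (simp add: qpw_def distrib_right exp_add)
lemma qpw_diff: "qpw Lq (a - b) = qpw Lq a / qpw Lq b"
  by (simp add: qpw_def left_diff_distrib exp_diff)
lemma qpw_minus: "qpw Lq (- a) = 1 / qpw Lq a"
  by (simp add: qpw_def exp_minus field_simps)
lemma qpw_nat: "qpw Lq (of_nat n) = exp Lq ^ n"
  by (simp add: qpw_def exp_of_nat_mult)
lemma qpw_nz: "qpw Lq a \<noteq> 0"
  by (simp add: qpw_def)
lemma qpw_0: "qpw Lq 0 = 1" by (simp add: qpw_def)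

lemma qpw_real_lt1:
  assumes "cmod (exp Lq) < 1" "e \<in> \<real>" "Re e > 0"
  shows "cmod (qpw Lq e) < 1"
proof -
  have "exp (Re Lq) < 1" using assms(1) by simp
  then have "Re Lq < 0" by simp
  moreover have "Im e = 0" using assms(2) by (simp add: complex_is_Real_iff)
  ultimately have "Re (e * Lq) < 0" using assms(3) by (simp add: mult_pos_neg)
  then show ?thesis by (simp add: qpw_def)
qed

locale S3 =
  fixes Lq t1 t2 h1 h2 l1 l2 a1 a2 b lam1 E0 :: complex and N :: nat
  assumes q_lt1: "cmod (exp Lq) < 1" and t_nz: "t1 \<noteq> 0" "t2 \<noteq> 0"
    and h2_def: "h2 = l2 - 1 - of_nat N"
    and lam1_def: "lam1 = (h1 + h2 - l1 - l2 - a1 - a2 - b + 2) / 2"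
    and real1: "lam1 + b + a1 \<in> \<real>" "Re (lam1 + b + a1) > 1"
    and real2: "lam1 + a2 \<in> \<real>" "Re (lam1 + a2) > 1"
    and root: "cpoly Lq t1 t2 h1 l1 l2 a1 a2 b lam1 N E0 = 0"
begin

abbreviation "q \<equiv> exp Lq"
abbreviation "r \<equiv> qpw Lq (1/2)"
abbreviation "La \<equiv> qpw Lq lam1"
abbreviation "L1 \<equiv> qpw Lq l1"
abbreviation "L2 \<equiv> qpw Lq l2"
abbreviation "P1 \<equiv> qpw Lq a1"
abbreviation "P2 \<equiv> qpw Lq a2"
abbreviation "Bh \<equiv> qpw Lq (b/2)"
abbreviation "QN \<equiv> exp Lq ^ N"

definition "al1 = qpw Lq (h1 + 1/2) * t1"
definition "al2 = qpw Lq (h2 + 1/2) * t2"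
definition "be1 = qpw Lq (l1 - 1/2) * t1"
definition "be2 = qpw Lq (l2 - 1/2) * t2"
definition "QQ = qpw Lq (lam1 + a1)"
definition "qe1 = qpw Lq (lam1 + a1 + b)"
definition "kap = qpw Lq ((h1 + h2 + l1 + l2 + a1 + a2) / 2) * (qpw Lq (b/2) + qpw Lq (- b/2)) * t1 * t2"

abbreviation "c k \<equiv> cseq Lq t1 t2 h1 l1 l2 a1 a2 b lam1 N E0 k"
abbreviation "xn k \<equiv> xc Lq t1 t2 h1 l1 l2 a1 a2 b lam1 N k"
abbreviation "yn k \<equiv> yc Lq t1 t2 h1 l1 l2 a1 a2 b lam1 N k"
abbreviation "zn k \<equiv> zc Lq t1 t2 h1 l1 l2 a1 a2 b lam1 N k"

lemma h1_eq': "h1 = 2* lam1 + l1 + a1 + a2 + b - 1 + of_nat N"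
  using lam1_def h2_def by (simp add: field_simps)

lemma h1_eq: "h1 = lam1 + lam1 + l1 + a1 + a2 + b/2 + b/2 + of_nat N - 1/2 - 1/2"
  using h1_eq' by (simp add: algebra_simps)

lemma r_sq: "q = r * r"
  by (simp add: qpw_def exp_add[symmetric])

lemma q_nz: "q \<noteq> 0" by simp
lemma r_nz: "r \<noteq> 0" by (simp add: qpw_nz)

lemma al1_eq: "al1 = La * La * L1 * P1 * P2 * Bh * Bh * QN * t1 / r"
proof -
  have "h1 + 1/2 = lam1 + lam1 + l1 + a1 + a2 + b/2 + b/2 + of_nat N - 1/2"
    unfolding h1_eq' by (simp add: field_simps)
  then show ?thesis unfolding al1_def by (simp only: qpw_add qpw_diff qpw_nat) simp
qed

lemma al2_eq: "al2 = L2 * t2 / (r * QN)"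
proof -
  have "h2 + 1/2 = l2 - 1/2 - of_nat N"
    unfolding h2_def by (simp add: field_simps)
  then show ?thesis unfolding al2_def by (simp only: qpw_add qpw_diff qpw_nat) simp
qed

lemma be1_eq: "be1 = L1 * t1 / r"
  unfolding be1_def qpw_diff by simp
lemma be2_eq: "be2 = L2 * t2 / r"
  unfolding be2_def qpw_diff by simp
lemma QQ_eq: "QQ = La * P1"
  unfolding QQ_def by (simp only: qpw_add)
lemma qe1_eq: "qe1 = La * P1 * Bh * Bh"
proof -
  have "lam1 + a1 + b = lam1 + a1 + b/2 + b/2" by simp
  then show ?thesis unfolding qe1_def by (simp only: qpw_add)
qed
lemma kap_eq: "kap = La * L1 * L2 * P1 * P2 * (Bh * Bh + 1) * t1 * t2 / (r * r)"
proof -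
  have "(h1 + h2 + l1 + l2 + a1 + a2) / 2 = lam1 + l1 + l2 + a1 + a2 + b/2 - 1/2 - 1/2"
    unfolding h1_eq' h2_def by (simp add: field_simps)
  then have "qpw Lq ((h1 + h2 + l1 + l2 + a1 + a2) / 2) = La * L1 * L2 * P1 * P2 * Bh / r / r"
    by (simp only: qpw_add qpw_diff)
  then show ?thesis unfolding kap_def using r_nz qpw_nz[of Lq "b/2"]
    by (simp add: qpw_minus field_simps)
qed


lemma nzs: "al1 \<noteq> 0" "al2 \<noteq> 0" "be1 \<noteq> 0" "be2 \<noteq> 0" "QQ \<noteq> 0" "qe1 \<noteq> 0"
  using t_nz by (auto simp: al1_def al2_def be1_def be2_def QQ_def qe1_def qpw_nz)

lemma atoms_nz: "La \<noteq> 0" "L1 \<noteq> 0" "L2 \<noteq> 0" "P1 \<noteq> 0" "P2 \<noteq> 0" "Bh \<noteq> 0" "r \<noteq> 0" "QN \<noteq> 0"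
  by (auto simp: qpw_nz)

definition "aF w = -(P2* qe1)* be1* (w/q - be2)* (1 - QQ* w/(q* al1))/(w/q)"
definition "bF w = -(P1/qe1)* al1* (QQ* w - al2)* (1 - w/be1)/(QQ* w)"
definition "cF w = -(P1 + P2* QQ/q)* w - (P1* al1* al2/QQ + P2* q* be1* be2)/w"
definition "Pp w = (\<Sum>k=0..N. c k * w^k)"
definition "XX k = -(P1* al1* al2/QQ + P2* q* be1* be2) + q^k* (P2* qe1* be1* be2) + (P1/qe1)* al1* al2* q/QQ/q^k"
definition "YY k = -E0 - q^k* P2* qe1* be1* (1 + be2* QQ/al1) - (P1/qe1)* al1* (1 + al2/(QQ* be1))/q^k"
definition "ZZ k = -(P1 + P2* QQ/q) + q^k* P2* qe1* be1* QQ/al1 + (P1/qe1)* al1/(q* be1)/q^k"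

lemma perk:
  assumes "w \<noteq> 0"
  shows "w* (cF w - E0) + w* aF(q* w)* q^k + w* bF(w/q)/q^k = XX k + YY k* w + ZZ k* w^2"
  using assms nzs unfolding aF_def bF_def cF_def XX_def YY_def ZZ_def
  by (simp add: field_simps) (simp add: algebra_simps power2_eq_square)

lemma XX_eq: "XX k = xn k"
proof -
  have e1: "qpw Lq (- of_nat k + l1 + l2 + a2) = L1* L2* P2/q^k"
  proof -
    have "qpw Lq (- of_nat k + l1 + l2 + a2) = qpw Lq (l1 + l2 + a2 - of_nat k)"
      by (rule arg_cong[where f="qpw Lq"]) (simp add: algebra_simps)
    then show ?thesis by (simp only: qpw_add qpw_diff qpw_nat)
  qed
  have e2: "qpw Lq (of_nat k - 1 + a1 + lam1 + b) = q^k* P1* La* Bh* Bh/(r* r)"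
  proof -
    have "qpw Lq (of_nat k - 1 + a1 + lam1 + b) = qpw Lq (of_nat k + a1 + lam1 + b/2 + b/2 - 1/2 - 1/2)"
      by (rule arg_cong[where f="qpw Lq"]) (simp add: algebra_simps)
    then show ?thesis by (simp only: qpw_add qpw_diff qpw_nat) simp
  qed
  show ?thesis unfolding XX_def xc_def e1 e2 qpw_nat al1_eq al2_eq be1_eq be2_eq QQ_eq qe1_eq
    using atoms_nz t_nz by (simp add: field_simps r_sq)
qed


lemma YY_eq: "YY k = -(E0 + yn (k+1))"
proof -
  have e1: "qpw Lq (1 - of_nat (k+1) - b) = 1 / (q^k * Bh * Bh)"
  proof -
    have "qpw Lq (1 - of_nat (k+1) - b) = qpw Lq (- (of_nat k + b/2 + b/2))"
      by (rule arg_cong[where f="qpw Lq"]) (simp add: algebra_simps)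
    then show ?thesis by (simp only: qpw_add qpw_diff qpw_nat qpw_minus)
  qed
  have e2: "qpw Lq (of_nat (k+1) - 1 - of_nat N) = q^k / QN"
  proof -
    have "qpw Lq (of_nat (k+1) - 1 - of_nat N) = qpw Lq (of_nat k - of_nat N)"
      by (rule arg_cong[where f="qpw Lq"]) (simp add: algebra_simps)
    then show ?thesis by (simp only: qpw_add qpw_diff qpw_nat qpw_minus)
  qed
  have e3: "qpw Lq (- lam1 + h1 + 1/2) = La * L1 * P1 * P2 * Bh * Bh * QN / r"
  proof -
    have "qpw Lq (- lam1 + h1 + 1/2) = qpw Lq (lam1 + l1 + a1 + a2 + b/2 + b/2 + of_nat N - 1/2)"
      by (rule arg_cong[where f="qpw Lq"]) (simp add: algebra_simps h1_eq')
    then show ?thesis by (simp only: qpw_add qpw_diff qpw_nat qpw_minus)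
  qed
  have e4: "qpw Lq (1 - of_nat (k+1) + a2) = P2 / q^k"
  proof -
    have "qpw Lq (1 - of_nat (k+1) + a2) = qpw Lq (a2 - of_nat k)"
      by (rule arg_cong[where f="qpw Lq"]) (simp add: algebra_simps)
    then show ?thesis by (simp only: qpw_add qpw_diff qpw_nat qpw_minus)
  qed
  have e5: "qpw Lq (of_nat (k+1) - 1 - of_nat N + a1) = q^k * P1 / QN"
  proof -
    have "qpw Lq (of_nat (k+1) - 1 - of_nat N + a1) = qpw Lq (of_nat k + a1 - of_nat N)"
      by (rule arg_cong[where f="qpw Lq"]) (simp add: algebra_simps)
    then show ?thesis by (simp only: qpw_add qpw_diff qpw_nat qpw_minus)
  qed
  have e6: "qpw Lq (l2 - 1/2) = L2 / r"
  proof -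
    have "qpw Lq (l2 - 1/2) = qpw Lq (l2 - 1/2)"
      by (rule arg_cong[where f="qpw Lq"]) (simp add: algebra_simps)
    then show ?thesis by (simp only: qpw_add qpw_diff qpw_nat qpw_minus)
  qed
  show ?thesis unfolding YY_def yc_def e1 e2 e3 e4 e5 e6 al1_eq al2_eq be1_eq be2_eq QQ_eq qe1_eq
    using atoms_nz t_nz by (simp add: field_simps r_sq)
qed

lemma ZZ_eq: "ZZ k = zn (k+2)"
proof -
  have e1: "qpw Lq (of_nat (k+2) - of_nat N - 2 + a1) = q^k * P1 / QN"
  proof -
    have "qpw Lq (of_nat (k+2) - of_nat N - 2 + a1) = qpw Lq (of_nat k + a1 - of_nat N)"
      by (rule arg_cong[where f="qpw Lq"]) (simp add: algebra_simps)
    then show ?thesis by (simp only: qpw_add qpw_diff qpw_nat qpw_minus)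
  qed
  have e2: "qpw Lq (of_nat N - of_nat (k+2) + 1 + a2 + lam1) = QN * P2 * La / q^k / r / r"
  proof -
    have "qpw Lq (of_nat N - of_nat (k+2) + 1 + a2 + lam1) = qpw Lq (of_nat N + a2 + lam1 - of_nat k - 1/2 - 1/2)"
      by (rule arg_cong[where f="qpw Lq"]) (simp add: algebra_simps)
    then show ?thesis by (simp only: qpw_add qpw_diff qpw_nat qpw_minus)
  qed
  have e3: "qpw Lq (of_nat N - of_nat (k+2) + 2) = QN / q^k"
  proof -
    have "qpw Lq (of_nat N - of_nat (k+2) + 2) = qpw Lq (of_nat N - of_nat k)"
      by (rule arg_cong[where f="qpw Lq"]) (simp add: algebra_simps)
    then show ?thesis by (simp only: qpw_add qpw_diff qpw_nat qpw_minus)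
  qed
  show ?thesis unfolding ZZ_def zc_def e1 e2 e3 al1_eq al2_eq be1_eq be2_eq QQ_eq qe1_eq
    using atoms_nz t_nz by (simp add: field_simps r_sq)
qed


lemma xn_nz: assumes "k \<ge> 1" shows "xn k \<noteq> 0"
proof -
  have "cmod (q ^ k) < 1" using q_lt1 assms by (simp add: norm_power power_less_one_iff)
  then have a: "1 - qpw Lq (of_nat k) \<noteq> 0" by (auto simp: qpw_nat)
  have "of_nat k - 1 + a1 + lam1 + b = of_real (real k - 1) + (lam1 + b + a1)" by simp
  also have "\<dots> \<in> \<real>" by (rule Reals_add[OF _ real1(1)]) simp
  finally have R: "of_nat k - 1 + a1 + lam1 + b \<in> \<real>" .
  have "Re (of_nat k - 1 + a1 + lam1 + b) = real k - 1 + Re (lam1 + b + a1)" by simp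
  then have "Re (of_nat k - 1 + a1 + lam1 + b) > 0" using real1 assms by simp
  then have "cmod (qpw Lq (of_nat k - 1 + a1 + lam1 + b)) < 1" using qpw_real_lt1[OF q_lt1 R] by simp
  then have b: "1 - qpw Lq (of_nat k - 1 + a1 + lam1 + b) \<noteq> 0" by auto
  show ?thesis unfolding xc_def using a b t_nz by (simp add: qpw_nz)
qed

definition "cm1 k = (if k = 0 then 0 else c (k - 1))"

lemma crec: "c (Suc k) * xn (Suc k) = c k * (E0 + yn (Suc k)) - cm1 k * zn (Suc k)"
proof (cases k)
  case 0 then show ?thesis using xn_nz[of 1] by (simp add: cm1_def)
next
  case (Suc m)
  have "xn (m + 2) \<noteq> 0" using xn_nz[of "m+2"] by simp
  then show ?thesis using Suc by (simp add: cm1_def numeral_2_eq_2)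
qed

lemma zn_top: "zn (N + 2) = 0"
  by (simp add: zc_def qpw_0)

lemma SM: "(\<Sum>k=0..M. c k * w^k * (XX k + YY k * w + ZZ k * w^2))
   = w^(M+1) * (c M * YY M + cm1 M * ZZ (M - 1)) + w^(M+2) * c M * ZZ M"
proof (induction M)
  case 0
  have "XX 0 = 0" using XX_eq[of 0] by (simp add: xc_def qpw_0)
  then show ?case by (simp add: cm1_def power2_eq_square algebra_simps)
next
  case (Suc M)
  have key: "c M * YY M + cm1 M * ZZ (M - 1) + c (Suc M) * XX (Suc M) = 0"
  proof -
    have h: "cm1 M * ZZ (M - 1) = cm1 M * zn (Suc M)"
      by (cases M) (simp_all add: cm1_def ZZ_eq)
    show ?thesis unfolding h using crec[of M] by (simp add: XX_eq YY_eq algebra_simps)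
  qed
  have "(\<Sum>k=0..Suc M. c k * w^k * (XX k + YY k * w + ZZ k * w^2))
     = w^(M+1) * (c M * YY M + cm1 M * ZZ (M - 1)) + w^(M+2) * c M * ZZ M
       + c (Suc M) * w^(Suc M) * (XX (Suc M) + YY (Suc M) * w + ZZ (Suc M) * w^2)"
    using Suc by simp
  also have "\<dots> = w^(M+1) * (c M * YY M + cm1 M * ZZ (M - 1) + c (Suc M) * XX (Suc M))
       + w^(Suc M + 1) * (c (Suc M) * YY (Suc M) + cm1 (Suc M) * ZZ (Suc M - 1))
       + w^(Suc M + 2) * c (Suc M) * ZZ (Suc M)"
    by (simp add: cm1_def algebra_simps power2_eq_square)
  finally show ?case using key by simp
qed

lemma ADJ:
  assumes "w \<noteq> 0"
  shows "(cF w - E0) * Pp w + aF (q * w) * Pp (q * w) + bF (w / q) * Pp (w / q) = 0"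
proof -
  have "w * ((cF w - E0) * Pp w + aF (q * w) * Pp (q * w) + bF (w / q) * Pp (w / q))
      = (\<Sum>k=0..N. c k * w^k * (w * (cF w - E0) + w * aF (q * w) * q^k + w * bF (w / q) / q^k))"
    unfolding Pp_def by (simp add: sum_distrib_left sum_distrib_right sum.distrib[symmetric]
        power_mult_distrib power_divide algebra_simps)
  also have "\<dots> = (\<Sum>k=0..N. c k * w^k * (XX k + YY k * w + ZZ k * w^2))"
    using perk[OF assms] by simp
  also have "\<dots> = 0"
  proof -
    have p: "(\<Prod>i=1..N. xn i) \<noteq> 0" using xn_nz by (auto simp: prod_zero_iff)
    have "c N * (E0 + yn (N + 1)) - cm1 N * zn (N + 1) = 0"
      using root p unfolding cpoly_def cm1_def by simp
    moreover have "cm1 N * ZZ (N - 1) = cm1 N * zn (N + 1)"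
    proof (cases "N = 0")
      case True show ?thesis unfolding cm1_def using True by simp
    next
      case False then have "N - 1 + 2 = N + 1" by simp
      with False show ?thesis by (simp add: cm1_def ZZ_eq)
    qed
    ultimately have "c N * YY N + cm1 N * ZZ (N - 1) = 0" by (simp add: YY_eq algebra_simps)
    moreover have "ZZ N = 0" using ZZ_eq[of N] zn_top by simp
    ultimately show ?thesis unfolding SM by simp
  qed
  finally show ?thesis using assms by simp
qed

end

context S3 begin

definition "cA1 = qpw Lq (- l1 + 1/2) / t1"
definition "cB1 = qpw Lq (lam1 - h1 + a1 - 1/2) / t1"

lemma cA1_eq: "cA1 = r / (L1 * t1)"
proof -
  have "qpw Lq (- l1 + 1/2) = qpw Lq (1/2 - l1)" by (rule arg_cong[where f="qpw Lq"]) simp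
  then show ?thesis unfolding cA1_def by (simp add: qpw_diff)
qed

lemma cB1_eq: "cB1 = QQ / al1"
proof -
  have "qpw Lq (lam1 - h1 + a1 - 1/2) = qpw Lq (lam1 + a1 - (h1 + 1/2))"
    by (rule arg_cong[where f="qpw Lq"]) (simp add: algebra_simps)
  then show ?thesis unfolding cB1_def QQ_def al1_def using t_nz
    by (simp only: qpw_diff qpw_add) (simp add: field_simps qpw_nz)
qed

definition "c1x x = (x - al1) * (x - al2) / x"
definition "c2x x = qpw Lq (a1 + a2) * (x - be1) * (x - be2) / x"
definition "c3x x = (qpw Lq a1 + qpw Lq a2) * x + kap / x"

lemma cA1_be1: "cA1 = 1 / be1"
  unfolding cA1_eq be1_eq by simp

lemma quadr_diff:
  fixes x z aa bb :: complex assumes "x \<noteq> 0" "z \<noteq> 0"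
  shows "(x - aa) * (x - bb) / x - (z - aa) * (z - bb) / z = (x - z) * (1 - aa * bb / (x * z))"
  using assms by (simp add: field_simps)

lemma K1:
  assumes w: "w \<noteq> 0" and d4: "1 - cA1 * w \<noteq> 0"
  shows "bF w * (qe1 * (1 - cB1 * w) / (1 - cA1 * w)) = c1x (QQ * w) * P1"
proof -
  have "be1 - w \<noteq> 0" using d4 nzs unfolding cA1_be1 by (simp add: field_simps)
  then show ?thesis unfolding bF_def c1x_def cB1_eq cA1_be1 using nzs w
    by (simp add: field_simps)
qed

lemma K2:
  assumes w: "w \<noteq> 0" and d3: "1 - cB1 * w / q \<noteq> 0"
  shows "aF w * (1 / qe1 * (1 - cA1 * w / q) / (1 - cB1 * w / q)) = c2x (w / q) * (1 / P1)"
proof -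
  have "q * al1 - QQ * w \<noteq> 0" using d3 nzs unfolding cB1_eq by (simp add: field_simps)
  then show ?thesis unfolding aF_def c2x_def cB1_eq cA1_be1 qpw_add using nzs w atoms_nz
    by (simp add: field_simps)
qed

lemma K3:
  assumes x: "x \<noteq> 0" and w: "w \<noteq> 0"
    and d1: "1 - QQ * w / x \<noteq> 0" and d2: "1 - w / (q * x) \<noteq> 0"
  shows "(c1x x - c1x (QQ * w)) * (P1 * (1 - w / x) / (1 - QQ * w / x))
     + (c2x x - c2x (w / q)) * (1 / P1 * (1 - QQ * w / (q * x)) / (1 - w / (q * x))) - c3x x = cF w"
proof -
  have d1': "x - QQ * w \<noteq> 0" using d1 x by (simp add: field_simps)
  have d2': "q * x - w \<noteq> 0" using d2 x by (simp add: field_simps)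
  have e1: "c1x x - c1x (QQ * w) = (x - QQ * w) * (1 - al1 * al2 / (x * (QQ * w)))"
    unfolding c1x_def by (rule quadr_diff) (use x w nzs in auto)
  have e2: "c2x x - c2x (w / q) = P1 * P2 * ((x - w / q) * (1 - be1 * be2 / (x * (w / q))))"
  proof -
    have "c2x x - c2x (w / q) = P1 * P2 * ((x - be1) * (x - be2) / x - (w / q - be1) * (w / q - be2) / (w / q))"
      unfolding c2x_def qpw_add by (simp add: field_simps)
    then show ?thesis using quadr_diff[of x "w / q" be1 be2] x w by simp
  qed
  have f1: "(x - QQ * w) * (1 - al1 * al2 / (x * (QQ * w))) * (P1 * (1 - w / x) / (1 - QQ * w / x))
      = P1 * (x - w) * (1 - al1 * al2 / (x * (QQ * w)))"
    using d1' x by (simp add: field_simps)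
  have f2: "P1 * P2 * ((x - w / q) * (1 - be1 * be2 / (x * (w / q)))) * (1 / P1 * (1 - QQ * w / (q * x)) / (1 - w / (q * x)))
      = P2 * (x - QQ * w / q) * (1 - be1 * be2 / (x * (w / q)))"
    using d2' x atoms_nz by (simp add: field_simps)
  have f3: "P1 * (x - w) * (1 - al1 * al2 / (x * (QQ * w))) + P2 * (x - QQ * w / q) * (1 - be1 * be2 / (x * (w / q))) - c3x x = cF w"
    unfolding c3x_def cF_def kap_eq al1_eq al2_eq be1_eq be2_eq QQ_eq r_sq using atoms_nz t_nz x w
    by (simp add: field_simps)
  show ?thesis unfolding e1 e2 f1 f2 f3 ..
qed

lemma kern1:
  assumes x: "x \<noteq> 0" and w: "w \<noteq> 0"
    and d1: "1 - QQ * w / x \<noteq> 0" and d2: "1 - w / (q * x) \<noteq> 0"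
    and d3: "1 - cB1 * w / q \<noteq> 0" and d4: "1 - cA1 * w \<noteq> 0"
  shows "c1x x * (P1 * (1 - w / x) / (1 - QQ * w / x)) + c2x x * (1 / P1 * (1 - QQ * w / (q * x)) / (1 - w / (q * x))) - c3x x
   = aF w * (1 / qe1 * (1 - cA1 * w / q) * (1 - QQ * w / (q * x)) / ((1 - cB1 * w / q) * (1 - w / (q * x))))
     + bF w * (qe1 * (1 - cB1 * w) * (1 - w / x) / ((1 - cA1 * w) * (1 - QQ * w / x))) + cF w"
proof -
  have a: "aF w * (1 / qe1 * (1 - cA1 * w / q) * (1 - QQ * w / (q * x)) / ((1 - cB1 * w / q) * (1 - w / (q * x))))
      = (aF w * (1 / qe1 * (1 - cA1 * w / q) / (1 - cB1 * w / q))) * ((1 - QQ * w / (q * x)) / (1 - w / (q * x)))"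
    by (simp add: mult.assoc)
  have b: "bF w * (qe1 * (1 - cB1 * w) * (1 - w / x) / ((1 - cA1 * w) * (1 - QQ * w / x)))
      = (bF w * (qe1 * (1 - cB1 * w) / (1 - cA1 * w))) * ((1 - w / x) / (1 - QQ * w / x))"
    by simp
  have lin: "A * R1 + B * R2 - C = B' * (1 / P1) * R2' + A' * P1 * R1' + F"
    if "(A - A') * R1 + (B - B') * R2 - C = F" "R1 = P1 * R1'" "R2 = 1 / P1 * R2'"
    for A A' B B' C F R1 R2 R1' R2' :: complex
    using that atoms_nz by (simp add: field_simps)
  show ?thesis unfolding a b K1[OF w d4] K2[OF w d3]
    by (rule lin[OF K3[OF x w d1 d2]]) simp_all
qed

end

lemma qgen_m: assumes "qgeneric q a" "q \<noteq> 0" shows "qgeneric q (a * q)" "qgeneric q (a / q)"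
proof -
  show "qgeneric q (a * q)" unfolding qgeneric_def
  proof
    fix m :: int
    have "a * q * q powi m = a * q powi (m + 1)" using assms(2) by (simp add: power_int_add mult_ac)
    then show "a * q * q powi m \<noteq> 1" using assms(1) unfolding qgeneric_def by metis
  qed
  show "qgeneric q (a / q)" unfolding qgeneric_def
  proof
    fix m :: int
    have "a / q * q powi m = a * q powi (m - 1)" using assms(2) by (simp add: power_int_diff field_simps)
    then show "a / q * q powi m \<noteq> 1" using assms(1) unfolding qgeneric_def by metis
  qed
qed

lemma qgen_ne1: "qgeneric q a \<Longrightarrow> a \<noteq> 1"
  unfolding qgeneric_def by (metis mult.right_neutral power_int_0_right)

lemma qpinf_div: "norm q < 1 \<Longrightarrow> q \<noteq> 0 \<Longrightarrow> qpinf q (a / q) = (1 - a / q) * qpinf q a"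
  using qpinf_Suc[of q "a / q"] by simp

lemma ratio_abs:
  fixes K P U A V B E Y Z :: complex
  assumes "V \<noteq> 0" "B \<noteq> 0" "Y \<noteq> 0" "Z \<noteq> 0"
  shows "K * P * U * A / (V * B) * E = (K * U * (Z * A) / (V * (Y * B)) * E) * (P * Y / Z)"
  using assms by (simp add: field_simps)

lemma ratio_abs2:
  fixes K U A V B E Q X Z Y1 Y :: complex
  assumes "V \<noteq> 0" "B \<noteq> 0" "Y \<noteq> 0" "Z \<noteq> 0" "X \<noteq> 0" "Y1 \<noteq> 0"
  shows "K * U * A / (V * B) * (E * Q) = (K * (X * U) * (Z * A) / ((Y1 * V) * (Y * B)) * E) * (Q * Y1 * Y / (X * Z))"
  using assms by (simp add: field_simps)

lemma assemble:
  fixes C1 C2 C3 R1 R2 A B Rm Rp Cc E P Aq Pq Bq Pd F :: complex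
  assumes k1: "C1 * R1 + C2 * R2 - C3 = A * Rm + B * Rp + Cc"
    and adj: "(Cc - E) * P + Aq * Pq + Bq * Pd = 0"
  shows "C1 * (F * R1) * P + C2 * (F * R2) * P - (C3 + E) * F * P
     = A * P * (F * Rm) - Bq * Pd * F - (Aq * Pq * F - B * P * (F * Rp))"
proof -
  have "C1 * (F * R1) * P + C2 * (F * R2) * P - (C3 + E) * F * P = F * P * (C1 * R1 + C2 * R2 - C3) - E * F * P"
    by (simp add: algebra_simps)
  also have "\<dots> = F * P * (A * Rm + B * Rp + Cc) - E * F * P" unfolding k1 ..
  also have "\<dots> = A * P * (F * Rm) + B * P * (F * Rp) + F * ((Cc - E) * P)" by (simp add: algebra_simps)
  also have "(Cc - E) * P = - (Aq * Pq + Bq * Pd)" using adj by (simp add: algebra_simps eq_neg_iff_add_eq_0)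
  finally show ?thesis by (simp add: algebra_simps)
qed

context S3 begin

definition "e1c = lam1 + a1 + b"
definition "F1 u L = exp (- a1 * u) * qpinf q (cA1 * exp L) * qpinf q (QQ * exp (L - u))
    / (qpinf q (cB1 * exp L) * qpinf q (exp (L - u))) * exp (e1c * L)"
definition "H1 u L = aF (exp L) * Pp (exp L) * F1 u (L - Lq) - bF (exp L / q) * Pp (exp L / q) * F1 u L"

lemma exp_shift_a: "exp (- a1 * (u - Lq)) = exp (- a1 * u) * P1" "exp (- a1 * (u + Lq)) = exp (- a1 * u) / P1"
  by (simp_all add: qpw_def algebra_simps exp_add exp_diff exp_minus field_simps)

lemma exp_shift_e: "exp (e1c * (L - Lq)) = exp (e1c * L) / qe1" "exp (e1c * (L + Lq)) = exp (e1c * L) * qe1"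
  by (simp_all add: qpw_def qe1_def e1c_def algebra_simps exp_add exp_diff)

lemma term1:
  assumes gA: "qgeneric q (cA1 * exp L)" and gA2: "qgeneric q (QQ * exp (L - u))"
    and gB: "qgeneric q (cB1 * exp L)" and gB2: "qgeneric q (exp (L - u))"
  shows "c1x (exp u) * F1 (u - Lq) L * Pp (exp L) + c2x (exp u) * F1 (u + Lq) L * Pp (exp L)
      - (c3x (exp u) + E0) * F1 u L * Pp (exp L) = H1 u L - H1 u (L + Lq)"
proof -
  define x where "x = exp u"
  define w where "w = exp L"
  define F where "F = F1 u L"
  have x0: "x \<noteq> 0" and w0: "w \<noteq> 0" by (simp_all add: x_def w_def)
  have ew: "exp (L - u) = w / x" by (simp add: x_def w_def exp_diff)
  have ql: "cmod q < 1" by (rule q_lt1)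
  note g = gA gA2 gB gB2
  have nzq: "qpinf q a \<noteq> 0" "qpinf q (a * q) \<noteq> 0" "qpinf q (a / q) \<noteq> 0" "a \<noteq> 1" "a * q \<noteq> 1" "a / q \<noteq> 1"
    if "qgeneric q a" for a
    using qpinf_nz_gen[OF ql that] qpinf_nz_gen[OF ql qgen_m(1)[OF that q_nz]]
      qpinf_nz_gen[OF ql qgen_m(2)[OF that q_nz]] qgen_ne1[OF that]
      qgen_ne1[OF qgen_m(1)[OF that q_nz]] qgen_ne1[OF qgen_m(2)[OF that q_nz]] by auto
  have d1: "1 - QQ * w / x \<noteq> 0" using nzq(4)[OF gA2] ew by simp
  have d2: "1 - w / (q * x) \<noteq> 0" using nzq(6)[OF gB2] ew by (simp add: field_simps)
  have d3: "1 - cB1 * w / q \<noteq> 0" using nzq(6)[OF gB] w_def by simp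
  have d4: "1 - cA1 * w \<noteq> 0" using nzq(4)[OF gA] w_def by simp
  have d5: "1 - w / x \<noteq> 0" using nzq(4)[OF gB2] ew by simp
  define e where "e = exp (L - u)"
  have ew: "e = w / x" by (simp add: e_def x_def w_def exp_diff)
  have e0: "e \<noteq> 0" by (simp add: e_def)
  have d1: "1 - QQ * e \<noteq> 0" using nzq(4)[OF gA2] e_def by simp
  have d2: "1 - e / q \<noteq> 0" using nzq(6)[OF gB2] e_def by simp
  have d3: "1 - cB1 * w / q \<noteq> 0" using nzq(6)[OF gB] w_def by simp
  have d4: "1 - cA1 * w \<noteq> 0" using nzq(4)[OF gA] w_def by simp
  have d5: "1 - e \<noteq> 0" using nzq(4)[OF gB2] e_def by simp
  have d6: "1 - QQ * e / q \<noteq> 0" using nzq(6)[OF gA2] e_def by simp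
  have d7: "1 - cB1 * w \<noteq> 0" using nzq(4)[OF gB] w_def by simp
  have n1: "qpinf q (cB1 * w) \<noteq> 0" "qpinf q (e * q) \<noteq> 0" "qpinf q e \<noteq> 0" "qpinf q (cB1 * w / q) \<noteq> 0"
      "qpinf q (e / q) \<noteq> 0" "qpinf q (cB1 * w * q) \<noteq> 0" "qpinf q (cA1 * w) \<noteq> 0" "qpinf q (QQ * e) \<noteq> 0"
    using nzq[OF gB] nzq[OF gB2] nzq[OF gA] nzq[OF gA2] unfolding e_def w_def by auto
  have F_eq: "F = exp (- a1 * u) * qpinf q (cA1 * w) * qpinf q (QQ * e) / (qpinf q (cB1 * w) * qpinf q e) * exp (e1c * L)"
    unfolding F_def F1_def e_def w_def ..
  have Fm: "F1 (u - Lq) L = F * (P1 * (1 - e) / (1 - QQ * e))"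
  proof -
    have a: "exp (L - (u - Lq)) = e * q" by (simp add: e_def exp_add[symmetric] algebra_simps)
    have b: "QQ * (e * q) = QQ * e * q" by simp
    show ?thesis unfolding F_eq F1_def a b exp_shift_a w_def[symmetric]
      unfolding qpinf_Suc[OF ql, of "QQ * e"] qpinf_Suc[OF ql, of e]
      using n1 d1 d5 by (intro ratio_abs) auto
  qed
  have Fp: "F1 (u + Lq) L = F * (1 / P1 * (1 - QQ * e / q) / (1 - e / q))"
  proof -
    have a: "exp (L - (u + Lq)) = e / q" by (simp add: e_def exp_diff[symmetric] algebra_simps)
    have b: "QQ * (e / q) = QQ * e / q" by simp
    show ?thesis unfolding F_eq F1_def a b exp_shift_a w_def[symmetric]
      unfolding qpinf_div[OF ql q_nz, of "QQ * e"] qpinf_div[OF ql q_nz, of e]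
      using n1 d2 d6 atoms_nz by (simp add: field_simps)
  qed
  have Gm: "F1 u (L - Lq) = F * (1 / qe1 * (1 - cA1 * w / q) * (1 - QQ * e / q) / ((1 - cB1 * w / q) * (1 - e / q)))"
  proof -
    have a: "exp (L - Lq - u) = e / q" by (simp add: e_def exp_diff[symmetric] algebra_simps)
    have a2: "exp (L - Lq) = w / q" by (simp add: w_def exp_diff)
    have b: "QQ * (e / q) = QQ * e / q" "cA1 * (w / q) = cA1 * w / q" "cB1 * (w / q) = cB1 * w / q" by simp_all
    show ?thesis unfolding F_eq F1_def a a2 b exp_shift_e w_def[symmetric]
      unfolding qpinf_div[OF ql q_nz, of "QQ * e"] qpinf_div[OF ql q_nz, of e]
        qpinf_div[OF ql q_nz, of "cA1 * w"] qpinf_div[OF ql q_nz, of "cB1 * w"]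
      using n1 d2 d3 nzs by (simp add: field_simps)
  qed
  have Gp: "F1 u (L + Lq) = F * (qe1 * (1 - cB1 * w) * (1 - e) / ((1 - cA1 * w) * (1 - QQ * e)))"
  proof -
    have a: "exp (L + Lq - u) = e * q" by (simp add: e_def exp_add[symmetric] algebra_simps)
    have a2: "exp (L + Lq) = w * q" by (simp add: w_def exp_add)
    have b: "QQ * (e * q) = QQ * e * q" "cA1 * (w * q) = cA1 * w * q" "cB1 * (w * q) = cB1 * w * q" by simp_all
    show ?thesis unfolding F_eq F1_def a a2 b exp_shift_e w_def[symmetric]
      unfolding qpinf_Suc[OF ql, of "QQ * e"] qpinf_Suc[OF ql, of e]
        qpinf_Suc[OF ql, of "cA1 * w"] qpinf_Suc[OF ql, of "cB1 * w"]
      using n1 d1 d4 d5 d7 nzs by (intro ratio_abs2) auto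
  qed
  have K: "c1x x * (P1 * (1 - e) / (1 - QQ * e)) + c2x x * (1 / P1 * (1 - QQ * e / q) / (1 - e / q)) - c3x x
     = aF w * (1 / qe1 * (1 - cA1 * w / q) * (1 - QQ * e / q) / ((1 - cB1 * w / q) * (1 - e / q)))
     + bF w * (qe1 * (1 - cB1 * w) * (1 - e) / ((1 - cA1 * w) * (1 - QQ * e))) + cF w"
  proof -
    have r1: "QQ * w / x = QQ * e" "w / (q * x) = e / q" "QQ * w / (q * x) = QQ * e / q" using ew by simp_all
    have dd1: "1 - QQ * w / x \<noteq> 0" "1 - w / (q * x) \<noteq> 0" using d1 d2 r1 by simp_all
    show ?thesis using kern1[OF x0 w0 dd1 d3 d4] unfolding r1 ew[symmetric] .
  qed
  have A: "(cF w - E0) * Pp w + aF (q * w) * Pp (q * w) + bF (w / q) * Pp (w / q) = 0"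
    by (rule ADJ[OF w0])
  have h2: "H1 u (L + Lq) = aF (q * w) * Pp (q * w) * F - bF w * Pp w * F1 u (L + Lq)"
    unfolding H1_def by (simp add: w_def F_def exp_add mult.commute)
  have h1: "H1 u L = aF w * Pp w * F1 u (L - Lq) - bF (w / q) * Pp (w / q) * F"
    unfolding H1_def by (simp add: w_def F_def)
  show ?thesis unfolding h1 h2 unfolding x_def[symmetric] w_def[symmetric] F_def[symmetric] Fm Fp Gm Gp
    by (rule assemble[OF K A])
qed

end

context S3 begin

definition "cC1 = qpw Lq (- lam1 + h1 - a1 + 3/2) * t1"
definition "cD1 = qpw Lq (l1 + 1/2) * t1"
definition "cD2 = qpw Lq (- lam1 - a1 + 1)"
definition "e2c = lam1 + a2 + of_nat N"
definition "qe2 = qpw Lq e2c"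

lemma cC1_eq: "cC1 = q * al1 / QQ"
proof -
  have "qpw Lq (- lam1 + h1 - a1 + 3/2) = qpw Lq (1 + (h1 + 1/2) - (lam1 + a1))"
    by (rule arg_cong[where f="qpw Lq"]) (simp add: algebra_simps)
  then show ?thesis unfolding cC1_def al1_def QQ_def
    by (simp only: qpw_add qpw_diff) (simp add: qpw_def field_simps)
qed

lemma cD1_eq: "cD1 = q * be1"
proof -
  have "qpw Lq (l1 + 1/2) = qpw Lq (1 + (l1 - 1/2))"
    by (rule arg_cong[where f="qpw Lq"]) (simp add: algebra_simps)
  then show ?thesis unfolding cD1_def be1_def
    by (simp only: qpw_add qpw_diff) (simp add: qpw_def field_simps)
qed

lemma cD2_eq: "cD2 = q / QQ"
proof -
  have "qpw Lq (- lam1 - a1 + 1) = qpw Lq (1 - (lam1 + a1))"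
    by (rule arg_cong[where f="qpw Lq"]) (simp add: algebra_simps)
  then show ?thesis unfolding cD2_def QQ_def
    by (simp only: qpw_add qpw_diff) (simp add: qpw_def field_simps)
qed

lemma qe2_eq: "qe2 = La * P2 * QN"
  unfolding qe2_def e2c_def by (simp only: qpw_add qpw_nat)

lemma K1b:
  assumes s: "sg \<noteq> 0" and d: "1 - cD1 * sg / q \<noteq> 0"
  shows "bF (1 / sg) * (1 / qe2 * (1 - cC1 * sg / q) / (1 - cD1 * sg / q)) = c1x (QQ / sg) * (1 / La)"
proof -
  have d': "1 - be1 * sg \<noteq> 0" using d unfolding cD1_eq by simp
  show ?thesis using s d' nzs atoms_nz t_nz
    unfolding bF_def c1x_def cC1_eq cD1_eq
    unfolding al1_eq al2_eq be1_eq QQ_eq qe1_eq qe2_eq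
    by (simp add: field_simps)
qed

lemma K2b:
  assumes s: "sg \<noteq> 0" and d: "1 - cC1 * sg \<noteq> 0"
  shows "aF (1 / sg) * (qe2 * (1 - cD1 * sg) / (1 - cC1 * sg)) = c2x (1 / (q * sg)) * La"
proof -
  have d': "QQ - q * al1 * sg \<noteq> 0" using d nzs unfolding cC1_eq by (simp add: field_simps)
  show ?thesis using s d' nzs atoms_nz t_nz
    unfolding aF_def c2x_def cC1_eq cD1_eq qpw_add
    unfolding al1_eq al2_eq be1_eq be2_eq QQ_eq qe1_eq qe2_eq
    by (simp add: field_simps)
qed

lemma K3b:
  assumes x: "x \<noteq> 0" and s: "sg \<noteq> 0"
    and d1: "1 - cD2 * (x * sg) / q \<noteq> 0" and d2: "1 - x * sg * q \<noteq> 0"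
  shows "(c1x x - c1x (QQ / sg)) * (1 / La * (1 - x * sg) / (1 - cD2 * (x * sg) / q))
     + (c2x x - c2x (1 / (q * sg))) * (La * (1 - cD2 * (x * sg)) / (1 - x * sg * q)) - c3x x = cF (1 / sg)"
proof -
  have d1': "x - QQ / sg \<noteq> 0" using d1 x s nzs unfolding cD2_eq by (auto simp: field_simps)
  have d2': "x - 1 / (q * sg) \<noteq> 0" using d2 x s by (auto simp: field_simps)
  have e1: "c1x x - c1x (QQ / sg) = (x - QQ / sg) * (1 - al1 * al2 / (x * (QQ / sg)))"
    unfolding c1x_def by (rule quadr_diff) (use x s nzs in auto)
  have e2: "c2x x - c2x (1 / (q * sg)) = P1 * P2 * ((x - 1 / (q * sg)) * (1 - be1 * be2 / (x * (1 / (q * sg)))))"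
  proof -
    have "c2x x - c2x (1 / (q * sg)) = P1 * P2 * ((x - be1) * (x - be2) / x - (1 / (q * sg) - be1) * (1 / (q * sg) - be2) / (1 / (q * sg)))"
      unfolding c2x_def qpw_add by (simp add: field_simps)
    then show ?thesis using quadr_diff[of x "1 / (q * sg)" be1 be2] x s by simp
  qed
  have f1: "(x - QQ / sg) * (1 - al1 * al2 / (x * (QQ / sg))) * (1 / La * (1 - x * sg) / (1 - cD2 * (x * sg) / q))
      = - (QQ / (La * sg)) * (1 - x * sg) * (1 - al1 * al2 / (x * (QQ / sg)))"
    using d1' d1 x s nzs atoms_nz unfolding cD2_eq by (simp add: field_simps)
  have f2: "P1 * P2 * ((x - 1 / (q * sg)) * (1 - be1 * be2 / (x * (1 / (q * sg))))) * (La * (1 - cD2 * (x * sg)) / (1 - x * sg * q))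
      = - (La * P1 * P2 / (q * sg)) * (1 - cD2 * (x * sg)) * (1 - be1 * be2 / (x * (1 / (q * sg))))"
    using d2' d2 x s atoms_nz by (simp add: field_simps)
  have f3: "- (QQ / (La * sg)) * (1 - x * sg) * (1 - al1 * al2 / (x * (QQ / sg)))
      + - (La * P1 * P2 / (q * sg)) * (1 - cD2 * (x * sg)) * (1 - be1 * be2 / (x * (1 / (q * sg)))) - c3x x = cF (1 / sg)"
    unfolding c3x_def cF_def kap_eq al1_eq al2_eq be1_eq be2_eq QQ_eq cD2_eq r_sq using atoms_nz t_nz x s
    by (simp add: field_simps)
  show ?thesis unfolding e1 e2 f1 f2 f3 ..
qed

lemma kern2:
  assumes x: "x \<noteq> 0" and s: "sg \<noteq> 0"
    and d1: "1 - cD2 * (x * sg) / q \<noteq> 0" and d2: "1 - x * sg * q \<noteq> 0"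
    and d3: "1 - cD1 * sg / q \<noteq> 0" and d4: "1 - cC1 * sg \<noteq> 0"
  shows "c1x x * (1 / La * (1 - x * sg) / (1 - cD2 * (x * sg) / q)) + c2x x * (La * (1 - cD2 * (x * sg)) / (1 - x * sg * q)) - c3x x
   = bF (1 / sg) * (1 / qe2 * (1 - cC1 * sg / q) * (1 - x * sg) / ((1 - cD1 * sg / q) * (1 - cD2 * (x * sg) / q)))
     + aF (1 / sg) * (qe2 * (1 - cD1 * sg) * (1 - cD2 * (x * sg)) / ((1 - cC1 * sg) * (1 - x * sg * q))) + cF (1 / sg)"
proof -
  have a: "bF (1 / sg) * (1 / qe2 * (1 - cC1 * sg / q) * (1 - x * sg) / ((1 - cD1 * sg / q) * (1 - cD2 * (x * sg) / q)))
      = (bF (1 / sg) * (1 / qe2 * (1 - cC1 * sg / q) / (1 - cD1 * sg / q))) * ((1 - x * sg) / (1 - cD2 * (x * sg) / q))"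
    by (simp add: mult.assoc)
  have b: "aF (1 / sg) * (qe2 * (1 - cD1 * sg) * (1 - cD2 * (x * sg)) / ((1 - cC1 * sg) * (1 - x * sg * q)))
      = (aF (1 / sg) * (qe2 * (1 - cD1 * sg) / (1 - cC1 * sg))) * ((1 - cD2 * (x * sg)) / (1 - x * sg * q))"
    by (simp add: mult.assoc)
  have lin: "A * R1 + B * R2 - C = A' * (1 / La) * R1' + B' * La * R2' + F"
    if "(A - A') * R1 + (B - B') * R2 - C = F" "R1 = 1 / La * R1'" "R2 = La * R2'"
    for A A' B B' C F R1 R2 R1' R2' :: complex
    using that atoms_nz by (simp add: field_simps)
  show ?thesis unfolding a b K1b[OF s d3] K2b[OF s d4]
    by (rule lin[OF K3b[OF x s d1 d2]]) simp_all
qed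

definition "F2 u L = exp (lam1 * u) * qpinf q (cC1 * exp L) * qpinf q (exp (u + L) * q)
    / (qpinf q (cD1 * exp L) * qpinf q (cD2 * exp (u + L))) * exp (e2c * L)"
definition "H2 u L = bF (1 / exp L) * Pp (1 / exp L) * F2 u (L - Lq) - aF (q / exp L) * Pp (q / exp L) * F2 u L"

lemma exp_shift_l: "exp (lam1 * (u - Lq)) = exp (lam1 * u) / La" "exp (lam1 * (u + Lq)) = exp (lam1 * u) * La"
  by (simp_all add: qpw_def algebra_simps exp_add exp_diff)

lemma exp_shift_e2: "exp (e2c * (L - Lq)) = exp (e2c * L) / qe2" "exp (e2c * (L + Lq)) = exp (e2c * L) * qe2"
  by (simp_all add: qpw_def qe2_def algebra_simps exp_add exp_diff)

lemma ratio_m2: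
  fixes K Lm U A V B E Y Z :: complex
  assumes "V \<noteq> 0" "B \<noteq> 0" "Z \<noteq> 0" "Lm \<noteq> 0"
  shows "K / Lm * U * (Y * A) / (V * (Z * B)) * E = (K * U * A / (V * B) * E) * (1 / Lm * Y / Z)"
  using assms by (simp add: field_simps)

lemma ratio_m3:
  fixes K U A V B E Q X Y Z1 Z :: complex
  assumes "V \<noteq> 0" "B \<noteq> 0" "Z \<noteq> 0" "Z1 \<noteq> 0" "Q \<noteq> 0"
  shows "K * (X * U) * (Y * A) / ((Z1 * V) * (Z * B)) * (E / Q) = (K * U * A / (V * B) * E) * (1 / Q * X * Y / (Z1 * Z))"
  using assms by (simp add: field_simps)

lemma assemble2:
  fixes C1 C2 C3 R1 R2 A B Rm Rp Cc E P Aq Pq Bq Pd F :: complex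
  assumes k1: "C1 * R1 + C2 * R2 - C3 = A * Rm + B * Rp + Cc"
    and adj: "(Cc - E) * P + Aq * Pq + Bq * Pd = 0"
  shows "C1 * (F * R1) * P + C2 * (F * R2) * P - (C3 + E) * F * P
     = A * P * (F * Rm) - Aq * Pq * F - (Bq * Pd * F - B * P * (F * Rp))"
  using assemble[OF k1 adj, of F] by (simp add: algebra_simps)

lemma term2:
  assumes gC: "qgeneric q (cC1 * exp L)" and gC2: "qgeneric q (exp (u + L) * q)"
    and gD: "qgeneric q (cD1 * exp L)" and gD2: "qgeneric q (cD2 * exp (u + L))"
  shows "c1x (exp u) * F2 (u - Lq) L * Pp (1 / exp L) + c2x (exp u) * F2 (u + Lq) L * Pp (1 / exp L)
      - (c3x (exp u) + E0) * F2 u L * Pp (1 / exp L) = H2 u L - H2 u (L + Lq)"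
proof -
  define x where "x = exp u"
  define sg where "sg = exp L"
  define y where "y = exp (u + L)"
  define F where "F = F2 u L"
  have x0: "x \<noteq> 0" and s0: "sg \<noteq> 0" by (simp_all add: x_def sg_def)
  have yx: "y = x * sg" by (simp add: y_def x_def sg_def exp_add)
  have ql: "cmod q < 1" by (rule q_lt1)
  have nzq: "qpinf q a \<noteq> 0" "qpinf q (a * q) \<noteq> 0" "qpinf q (a / q) \<noteq> 0" "a \<noteq> 1" "a * q \<noteq> 1" "a / q \<noteq> 1"
    if "qgeneric q a" for a
    using qpinf_nz_gen[OF ql that] qpinf_nz_gen[OF ql qgen_m(1)[OF that q_nz]]
      qpinf_nz_gen[OF ql qgen_m(2)[OF that q_nz]] qgen_ne1[OF that]
      qgen_ne1[OF qgen_m(1)[OF that q_nz]] qgen_ne1[OF qgen_m(2)[OF that q_nz]] by auto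
  have qy: "y * q / q = y" by simp
  have d1: "1 - cD2 * y / q \<noteq> 0" using nzq(6)[OF gD2] y_def by simp
  have d2: "1 - y * q \<noteq> 0" using nzq(4)[OF gC2] y_def by simp
  have d3: "1 - cD1 * sg / q \<noteq> 0" using nzq(6)[OF gD] sg_def by simp
  have d4: "1 - cC1 * sg \<noteq> 0" using nzq(4)[OF gC] sg_def by simp
  have d5: "1 - y \<noteq> 0" using nzq(6)[OF gC2] y_def by simp
  have d6: "1 - cD2 * y \<noteq> 0" using nzq(4)[OF gD2] y_def by simp
  have d7: "1 - cD1 * sg \<noteq> 0" using nzq(4)[OF gD] sg_def by simp
  have n1: "qpinf q (cD1 * sg) \<noteq> 0" "qpinf q (cD2 * y) \<noteq> 0" "qpinf q (cD1 * sg * q) \<noteq> 0"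
      "qpinf q (cD2 * y * q) \<noteq> 0" "qpinf q (cD1 * sg / q) \<noteq> 0" "qpinf q (cD2 * y / q) \<noteq> 0"
    using nzq[OF gD] nzq[OF gD2] unfolding y_def sg_def by auto
  have F_eq: "F = exp (lam1 * u) * qpinf q (cC1 * sg) * qpinf q (y * q) / (qpinf q (cD1 * sg) * qpinf q (cD2 * y)) * exp (e2c * L)"
    unfolding F_def F2_def y_def sg_def ..
  have Fm: "F2 (u - Lq) L = F * (1 / La * (1 - y) / (1 - cD2 * y / q))"
  proof -
    have a: "exp (u - Lq + L) * q = y" by (simp add: y_def exp_add exp_diff)
    have b: "cD2 * exp (u - Lq + L) = cD2 * y / q" by (simp add: y_def exp_add exp_diff)
    show ?thesis unfolding F_eq F2_def a b exp_shift_l sg_def[symmetric]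
      unfolding qpinf_Suc[OF ql, of y] qpinf_div[OF ql q_nz, of "cD2 * y"]
      using n1 d1 atoms_nz by (intro ratio_m2) auto
  qed
  have Fp: "F2 (u + Lq) L = F * (La * (1 - cD2 * y) / (1 - y * q))"
  proof -
    have a: "exp (u + Lq + L) * q = y * q * q" by (simp add: y_def exp_add)
    have b: "cD2 * exp (u + Lq + L) = cD2 * y * q" by (simp add: y_def exp_add)
    show ?thesis unfolding F_eq F2_def a b exp_shift_l sg_def[symmetric]
      unfolding qpinf_Suc[OF ql, of "y * q"] qpinf_Suc[OF ql, of "cD2 * y"]
      using n1 d2 d6 by (intro ratio_abs) auto
  qed
  have Gm: "F2 u (L - Lq) = F * (1 / qe2 * (1 - cC1 * sg / q) * (1 - y) / ((1 - cD1 * sg / q) * (1 - cD2 * y / q)))"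
  proof -
    have a: "exp (u + (L - Lq)) * q = y" by (simp add: y_def exp_add exp_diff)
    have b: "cD2 * exp (u + (L - Lq)) = cD2 * y / q" by (simp add: y_def exp_add exp_diff)
    have c: "cC1 * exp (L - Lq) = cC1 * sg / q" "cD1 * exp (L - Lq) = cD1 * sg / q" by (simp_all add: sg_def exp_diff)
    have nq: "qe2 \<noteq> 0" by (simp add: qe2_def qpw_nz)
    show ?thesis unfolding F_eq F2_def a b c exp_shift_e2
      unfolding qpinf_Suc[OF ql, of y] qpinf_div[OF ql q_nz, of "cD2 * y"]
        qpinf_div[OF ql q_nz, of "cC1 * sg"] qpinf_div[OF ql q_nz, of "cD1 * sg"]
      using n1 d1 d3 nq by (intro ratio_m3) auto
  qed
  have Gp: "F2 u (L + Lq) = F * (qe2 * (1 - cD1 * sg) * (1 - cD2 * y) / ((1 - cC1 * sg) * (1 - y * q)))"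
  proof -
    have a: "exp (u + (L + Lq)) * q = y * q * q" by (simp add: y_def exp_add)
    have b: "cD2 * exp (u + (L + Lq)) = cD2 * y * q" by (simp add: y_def exp_add)
    have c: "cC1 * exp (L + Lq) = cC1 * sg * q" "cD1 * exp (L + Lq) = cD1 * sg * q" by (simp_all add: sg_def exp_add)
    show ?thesis unfolding F_eq F2_def a b c exp_shift_e2
      unfolding qpinf_Suc[OF ql, of "y * q"] qpinf_Suc[OF ql, of "cD2 * y"]
        qpinf_Suc[OF ql, of "cC1 * sg"] qpinf_Suc[OF ql, of "cD1 * sg"]
      using n1 d2 d4 d6 d7 by (intro ratio_abs2) auto
  qed
  have K: "c1x x * (1 / La * (1 - y) / (1 - cD2 * y / q)) + c2x x * (La * (1 - cD2 * y) / (1 - y * q)) - c3x x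
   = bF (1 / sg) * (1 / qe2 * (1 - cC1 * sg / q) * (1 - y) / ((1 - cD1 * sg / q) * (1 - cD2 * y / q)))
     + aF (1 / sg) * (qe2 * (1 - cD1 * sg) * (1 - cD2 * y) / ((1 - cC1 * sg) * (1 - y * q))) + cF (1 / sg)"
    using kern2[OF x0 s0 _ _ d3 d4] d1 d2 unfolding yx by simp
  have s1: "1 / sg \<noteq> 0" using s0 by simp
  have A: "(cF (1 / sg) - E0) * Pp (1 / sg) + aF (q * (1 / sg)) * Pp (q * (1 / sg)) + bF (1 / sg / q) * Pp (1 / sg / q) = 0"
    by (rule ADJ[OF s1])
  have A': "(cF (1 / sg) - E0) * Pp (1 / sg) + aF (q / sg) * Pp (q / sg) + bF (1 / (sg * q)) * Pp (1 / (sg * q)) = 0"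
    using A by simp
  have h2: "H2 u (L + Lq) = bF (1 / (sg * q)) * Pp (1 / (sg * q)) * F - aF (1 / sg) * Pp (1 / sg) * F2 u (L + Lq)"
    unfolding H2_def by (simp add: sg_def F_def exp_add)
  have h1: "H2 u L = bF (1 / sg) * Pp (1 / sg) * F2 u (L - Lq) - aF (q / sg) * Pp (q / sg) * F"
    unfolding H2_def by (simp add: sg_def F_def)
  show ?thesis unfolding h1 h2 unfolding x_def[symmetric] sg_def[symmetric] F_def[symmetric] Fm Fp Gm Gp
    by (rule assemble2[OF K A'])
qed

end

lemma qgen_powi: assumes "qgeneric q a" "q \<noteq> 0" shows "qgeneric q (a * q powi n)"
  unfolding qgeneric_def
proof
  fix m :: int
  have "a * q powi n * q powi m = a * q powi (n + m)" using assms(2) by (simp add: power_int_add mult_ac)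
  then show "a * q powi n * q powi m \<noteq> 1" using assms(1) unfolding qgeneric_def by metis
qed

lemma exp_lat: "exp (L0 + of_int n * Lq) = exp L0 * exp (Lq::complex) powi n"
  by (simp add: exp_add exp_int_mult)

lemma exp_lat_e: "exp (e * (L0 + of_int n * Lq)) = exp (e * L0) * exp (e * (Lq::complex)) powi n"
proof -
  have "exp (e * (L0 + of_int n * Lq)) = exp (e * L0) * exp (of_int n * (e * Lq))"
    by (simp add: distrib_left exp_add mult_ac)
  then show ?thesis by (simp add: exp_int_mult)
qed

context S3 begin

lemma S1:
  assumes g: "qgeneric q (cA1 * exp L0)" "qgeneric q (QQ * exp (L0 - u'))"
     "qgeneric q (cB1 * exp L0)" "qgeneric q (exp (L0 - u'))"
    and j: "- 1 \<le> j" "j \<le> int N + 1"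
  shows "bilat_summable (\<lambda>n. F1 u' (L0 + of_int n * Lq) * exp (of_int j * (L0 + of_int n * Lq)))"
proof -
  define A1 where "A1 = cA1 * exp L0"
  define A2 where "A2 = QQ * exp (L0 - u')"
  define B1 where "B1 = cB1 * exp L0"
  define B2 where "B2 = exp (L0 - u')"
  define z where "z = exp ((e1c + of_int j) * Lq)"
  have eq: "F1 u' (L0 + of_int n * Lq) * exp (of_int j * (L0 + of_int n * Lq))
      = exp (- a1 * u') * exp ((e1c + of_int j) * L0) * (R4 q A1 A2 B1 B2 n * z powi n)" for n
  proof -
    have a: "exp (L0 + of_int n * Lq - u') = exp (L0 - u') * q powi n"
      by (simp add: exp_add exp_diff exp_int_mult[symmetric] algebra_simps)
    have b: "exp (e1c * (L0 + of_int n * Lq)) * exp (of_int j * (L0 + of_int n * Lq))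
       = exp ((e1c + of_int j) * L0) * z powi n"
      unfolding z_def exp_lat_e[symmetric] by (simp add: exp_add[symmetric] algebra_simps)
    show ?thesis unfolding F1_def R4_def a exp_lat A1_def A2_def B1_def B2_def
      using b by (simp add: mult_ac)
  qed
  have nzc: "cA1 \<noteq> 0" "cB1 \<noteq> 0" using nzs by (simp_all add: cA1_be1 cB1_eq)
  have zlt: "cmod z < 1"
  proof -
    have R: "e1c + of_int j \<in> \<real>" unfolding e1c_def using real1(1)
      by (metis Reals_add Reals_of_int add.commute add.left_commute)
    have "Re (e1c + of_int j) > 0" unfolding e1c_def using real1(2) j by (simp add: algebra_simps)
    then show ?thesis using qpw_real_lt1[OF q_lt1 R] by (simp add: z_def qpw_def)
  qed
  have rlt: "cmod (A1 * A2 / (B1 * B2) / z) < 1"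
  proof -
    have "A1 * A2 / (B1 * B2) = al1 / be1"
      unfolding A1_def A2_def B1_def B2_def cA1_be1 cB1_eq using nzs by (simp add: field_simps)
    also have "\<dots> = qpw Lq (h1 - l1 + 1)"
    proof -
      have "qpw Lq (h1 - l1 + 1) = qpw Lq ((h1 + 1/2) - (l1 - 1/2))" by (rule arg_cong[where f="qpw Lq"]) simp
      also have "\<dots> = qpw Lq (h1 + 1/2) / qpw Lq (l1 - 1/2)" by (rule qpw_diff)
      finally show ?thesis unfolding al1_def be1_def using t_nz by simp
    qed
    finally have "A1 * A2 / (B1 * B2) / z = qpw Lq (h1 - l1 + 1) / qpw Lq (e1c + of_int j)"
      by (simp add: z_def qpw_def)
    also have "\<dots> = qpw Lq (lam1 + a2 + of_nat N - of_int j)"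
    proof -
      have "lam1 + a2 + of_nat N - of_int j = (h1 - l1 + 1) - (e1c + of_int j)"
        unfolding e1c_def h1_eq' by (simp add: algebra_simps)
      then show ?thesis by (simp only: qpw_diff[symmetric])
    qed
    finally have e: "A1 * A2 / (B1 * B2) / z = qpw Lq (lam1 + a2 + of_nat N - of_int j)" .
    have R: "lam1 + a2 + of_nat N - of_int j \<in> \<real>"
      using real2(1) by (metis Reals_diff Reals_add Reals_of_nat Reals_of_int)
    have "Re (lam1 + a2 + of_nat N - of_int j) > 0" using real2(2) j by simp
    then show ?thesis unfolding e using qpw_real_lt1[OF q_lt1 R] by simp
  qed
  have "bilat_summable (\<lambda>n. R4 q A1 A2 B1 B2 n * z powi n)"
    by (rule gen_bilat) (use g q_lt1 nzc nzs zlt rlt in \<open>auto simp: A1_def A2_def B1_def B2_def z_def\<close>)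
  then show ?thesis unfolding eq by (rule bs_cmult)
qed

lemma al1_be1: "al1 / be1 = qpw Lq (h1 - l1 + 1)"
proof -
  have "qpw Lq (h1 - l1 + 1) = qpw Lq ((h1 + 1/2) - (l1 - 1/2))" by (rule arg_cong[where f="qpw Lq"]) simp
  also have "\<dots> = qpw Lq (h1 + 1/2) / qpw Lq (l1 - 1/2)" by (rule qpw_diff)
  finally show ?thesis unfolding al1_def be1_def using t_nz by simp
qed

lemma S2:
  assumes g: "qgeneric q (cC1 * exp L0)" "qgeneric q (exp (u' + L0) * q)"
     "qgeneric q (cD1 * exp L0)" "qgeneric q (cD2 * exp (u' + L0))"
    and j: "- int N - 1 \<le> j" "j \<le> 1"
  shows "bilat_summable (\<lambda>n. F2 u' (L0 + of_int n * Lq) * exp (of_int j * (L0 + of_int n * Lq)))"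
proof -
  define A1 where "A1 = cC1 * exp L0"
  define A2 where "A2 = exp (u' + L0) * q"
  define B1 where "B1 = cD1 * exp L0"
  define B2 where "B2 = cD2 * exp (u' + L0)"
  define z where "z = exp ((e2c + of_int j) * Lq)"
  have eq: "F2 u' (L0 + of_int n * Lq) * exp (of_int j * (L0 + of_int n * Lq))
      = exp (lam1 * u') * exp ((e2c + of_int j) * L0) * (R4 q A1 A2 B1 B2 n * z powi n)" for n
  proof -
    have a: "exp (u' + (L0 + of_int n * Lq)) = exp (u' + L0) * q powi n"
      by (simp add: exp_add exp_int_mult[symmetric] algebra_simps)
    have b: "exp (e2c * (L0 + of_int n * Lq)) * exp (of_int j * (L0 + of_int n * Lq))
       = exp ((e2c + of_int j) * L0) * z powi n"
      unfolding z_def exp_lat_e[symmetric] by (simp add: exp_add[symmetric] algebra_simps)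
    show ?thesis unfolding F2_def R4_def a exp_lat A1_def A2_def B1_def B2_def
      using b by (simp add: mult_ac)
  qed
  have nzc: "cC1 \<noteq> 0" "cD1 \<noteq> 0" "cD2 \<noteq> 0" using nzs by (simp_all add: cC1_eq cD1_eq cD2_eq)
  have zlt: "cmod z < 1"
  proof -
    have R: "e2c + of_int j \<in> \<real>" unfolding e2c_def using real2(1)
      by (metis Reals_add Reals_of_int Reals_of_nat)
    have "Re (e2c + of_int j) > 0" unfolding e2c_def using real2(2) j by (simp add: algebra_simps)
    then show ?thesis using qpw_real_lt1[OF q_lt1 R] by (simp add: z_def qpw_def)
  qed
  have rlt: "cmod (A1 * A2 / (B1 * B2) / z) < 1"
  proof -
    have "A1 * A2 / (B1 * B2) = al1 / be1"
      unfolding A1_def A2_def B1_def B2_def cC1_eq cD1_eq cD2_eq using nzs by (simp add: field_simps)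
    also have "\<dots> = qpw Lq (h1 - l1 + 1)" by (rule al1_be1)
    finally have "A1 * A2 / (B1 * B2) / z = qpw Lq (h1 - l1 + 1) / qpw Lq (e2c + of_int j)"
      by (simp add: z_def qpw_def)
    also have "\<dots> = qpw Lq (lam1 + b + a1 - of_int j)"
    proof -
      have "lam1 + b + a1 - of_int j = (h1 - l1 + 1) - (e2c + of_int j)"
        unfolding e2c_def h1_eq' by (simp add: algebra_simps)
      then show ?thesis by (simp only: qpw_diff[symmetric])
    qed
    finally have e: "A1 * A2 / (B1 * B2) / z = qpw Lq (lam1 + b + a1 - of_int j)" .
    have R: "lam1 + b + a1 - of_int j \<in> \<real>"
      using real1(1) by (metis Reals_diff Reals_of_int)
    have "Re (lam1 + b + a1 - of_int j) > 0" using real1(2) j by simp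
    then show ?thesis unfolding e using qpw_real_lt1[OF q_lt1 R] by simp
  qed
  have "bilat_summable (\<lambda>n. R4 q A1 A2 B1 B2 n * z powi n)"
    by (rule gen_bilat) (use g q_lt1 nzc nzs zlt rlt in \<open>auto simp: A1_def A2_def B1_def B2_def z_def\<close>)
  then show ?thesis unfolding eq by (rule bs_cmult)
qed

end

lemma bs_tendsto:
  assumes "bilat_summable f"
  shows "(\<lambda>n. f (int n)) \<longlonglongrightarrow> 0" "(\<lambda>n. f (- int n)) \<longlonglongrightarrow> 0"
proof -
  show "(\<lambda>n. f (int n)) \<longlonglongrightarrow> 0" using assms by (auto simp: bilat_summable_def intro: summable_LIMSEQ_zero)
  have "(\<lambda>n. f (- int (Suc n))) \<longlonglongrightarrow> 0" using assms by (auto simp: bilat_summable_def intro: summable_LIMSEQ_zero)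
  then show "(\<lambda>n. f (- int n)) \<longlonglongrightarrow> 0"
    using filterlim_sequentially_Suc[of "\<lambda>n. f (- int n)"] by simp
qed

context S3 begin

lemma LPsum:
  assumes Q: "\<And>w. w \<noteq> 0 \<Longrightarrow> Qf w = qm / w + q0 + qp * w"
    and S: "\<And>m. - 1 \<le> m \<Longrightarrow> m \<le> int N + 1 \<Longrightarrow> bilat_summable (\<lambda>n. G n * W n powi m)"
    and W: "\<And>n. W n \<noteq> 0"
  shows "bilat_summable (\<lambda>n. Qf (W n) * Pp (W n) * G n)"
proof -
  have eq: "Qf (W n) * Pp (W n) * G n = (\<Sum>k\<in>{0..N}. c k * (qm * (G n * W n powi (int k - 1))
        + q0 * (G n * W n powi (int k)) + qp * (G n * W n powi (int k + 1))))" for n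
  proof -
    have a: "W n powi (int k - 1) = W n ^ k / W n" "W n powi (int k + 1) = W n ^ k * W n" "W n powi (int k) = W n ^ k" for k
      using W[of n] by (simp_all add: power_int_diff power_int_add power_int_of_nat)
    show ?thesis unfolding Q[OF W] Pp_def a
      by (simp add: sum_distrib_left sum_distrib_right algebra_simps)
  qed
  have "bilat_summable (\<lambda>n. \<Sum>k\<in>{0..N}. c k * (qm * (G n * W n powi (int k - 1))
        + q0 * (G n * W n powi (int k)) + qp * (G n * W n powi (int k + 1))))"
  proof (rule bs_sum[THEN conjunct1])
    fix k assume "k \<in> {0..N}"
    then have k: "k \<le> N" by simp
    have s1: "bilat_summable (\<lambda>n. G n * W n powi (int k - 1))" by (rule S) (use k in auto)
    have s2: "bilat_summable (\<lambda>n. G n * W n powi (int k))" by (rule S) (use k in auto)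
    have s3: "bilat_summable (\<lambda>n. G n * W n powi (int k + 1))" by (rule S) (use k in auto)
    show "bilat_summable (\<lambda>n. c k * (qm * (G n * W n powi (int k - 1))
        + q0 * (G n * W n powi (int k)) + qp * (G n * W n powi (int k + 1))))"
      by (intro bs_cmult bs_add s1 s2 s3)
  qed
  then show ?thesis unfolding eq .
qed

lemma aF_lp: "w \<noteq> 0 \<Longrightarrow> aF w = (P2 * qe1 * be1 * be2 * q) / w + (-(P2 * qe1 * be1) * (1 + be2 * QQ / al1)) + (P2 * qe1 * be1 * QQ / (q * al1)) * w"
  unfolding aF_def using nzs by (simp add: field_simps)

lemma bF_lp: "w \<noteq> 0 \<Longrightarrow> bF w = ((P1 / qe1) * al1 * al2 / QQ) / w + (-(P1 / qe1) * al1 * (1 + al2 / (QQ * be1))) + ((P1 / qe1) * al1 / be1) * w"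
  unfolding bF_def using nzs by (simp add: field_simps)

lemma expw_powi: "exp (x::complex) powi m = exp (of_int m * x)"
  by (simp add: exp_int_mult)

definition "gen1 u' L0 \<longleftrightarrow> qgeneric q (cA1 * exp L0) \<and> qgeneric q (QQ * exp (L0 - u'))
     \<and> qgeneric q (cB1 * exp L0) \<and> qgeneric q (exp (L0 - u'))"

lemma gen1_lat: "gen1 u' L0 \<Longrightarrow> gen1 u' (L0 + of_int n * Lq)"
proof -
  assume g: "gen1 u' L0"
  have e: "exp (L0 + of_int n * Lq) = exp L0 * q powi n" "exp (L0 + of_int n * Lq - u') = exp (L0 - u') * q powi n"
    by (simp_all add: exp_add exp_diff exp_int_mult[symmetric] algebra_simps)
  show ?thesis using g unfolding gen1_def e mult.assoc[symmetric]
    by (auto intro!: qgen_powi)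
qed

lemma gen1_shift: "gen1 u L0 \<Longrightarrow> gen1 (u - Lq) L0 \<and> gen1 (u + Lq) L0"
proof -
  assume g: "gen1 u L0"
  have e: "exp (L0 - (u - Lq)) = exp (L0 - u) * q" "exp (L0 - (u + Lq)) = exp (L0 - u) / q"
    by (simp_all add: exp_add exp_diff algebra_simps)
  show ?thesis using g unfolding gen1_def e mult.assoc[symmetric] times_divide_eq_right[symmetric]
    by (auto intro!: qgen_m)
qed

lemma S1': "gen1 u' L0 \<Longrightarrow> - 1 \<le> j \<Longrightarrow> j \<le> int N + 1 \<Longrightarrow>
   bilat_summable (\<lambda>n. F1 u' (L0 + of_int n * Lq) * exp (of_int j * (L0 + of_int n * Lq)))"
  unfolding gen1_def by (rule S1) auto

lemma T1_summ:
  assumes "gen1 u' L0"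
  shows "bilat_summable (\<lambda>n. F1 u' (L0 + of_int n * Lq) * Pp (exp (L0 + of_int n * Lq)))"
proof -
  have eq: "F1 u' (L0 + of_int n * Lq) * Pp (exp (L0 + of_int n * Lq))
     = (\<Sum>k\<in>{0..N}. c k * (F1 u' (L0 + of_int n * Lq) * exp (of_int (int k) * (L0 + of_int n * Lq))))" for n
    unfolding Pp_def by (simp add: sum_distrib_left exp_of_nat_mult[symmetric] mult_ac)
  show ?thesis unfolding eq
    by (rule bs_sum[THEN conjunct1], rule bs_cmult, rule S1'[OF assms]) auto
qed

lemma H1_summ:
  assumes g: "gen1 u L0"
  shows "bilat_summable (\<lambda>n. H1 u (L0 + of_int n * Lq))"
proof -
  define W where "W n = exp (L0 + of_int n * Lq)" for n :: int
  have W0: "W n \<noteq> 0" "W n / q \<noteq> 0" for n by (simp_all add: W_def)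
  have p1: "bilat_summable (\<lambda>n. aF (W n) * Pp (W n) * F1 u (L0 + of_int n * Lq - Lq))"
  proof (rule LPsum[OF aF_lp])
    fix m :: int assume m: "- 1 \<le> m" "m \<le> int N + 1"
    define f where "f n = F1 u (L0 + of_int n * Lq) * exp (of_int m * (L0 + of_int n * Lq))" for n
    have "bilat_summable f" unfolding f_def by (rule S1'[OF g m])
    then have "bilat_summable (\<lambda>n. exp (of_int m * Lq) * f (n - 1))" by (intro bs_cmult bs_shift_minus)
    moreover have "exp (of_int m * Lq) * f (n - 1) = F1 u (L0 + of_int n * Lq - Lq) * W n powi m" for n
      unfolding f_def W_def expw_powi by (simp add: algebra_simps exp_add[symmetric])
    ultimately show "bilat_summable (\<lambda>n. F1 u (L0 + of_int n * Lq - Lq) * W n powi m)" by simp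
  qed (use W0 in auto)
  have p2: "bilat_summable (\<lambda>n. bF (W n / q) * Pp (W n / q) * F1 u (L0 + of_int n * Lq))"
  proof (rule LPsum[OF bF_lp])
    fix m :: int assume m: "- 1 \<le> m" "m \<le> int N + 1"
    define f where "f n = F1 u (L0 + of_int n * Lq) * exp (of_int m * (L0 + of_int n * Lq))" for n
    have "bilat_summable f" unfolding f_def by (rule S1'[OF g m])
    then have "bilat_summable (\<lambda>n. exp (- (of_int m * Lq)) * f n)" by (intro bs_cmult)
    moreover have "exp (- (of_int m * Lq)) * f n = F1 u (L0 + of_int n * Lq) * (W n / q) powi m" for n
    proof -
      have "W n / q = exp (L0 + of_int n * Lq - Lq)" by (simp add: W_def exp_diff)
      then have e: "(W n / q) powi m = exp (of_int m * (L0 + of_int n * Lq) + - (of_int m * Lq))"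
        by (simp add: expw_powi algebra_simps)
      show ?thesis unfolding f_def e exp_add by (simp add: mult_ac)
    qed
    ultimately show "bilat_summable (\<lambda>n. F1 u (L0 + of_int n * Lq) * (W n / q) powi m)" by simp
  qed (use W0 in auto)
  have "bilat_summable (\<lambda>n. aF (W n) * Pp (W n) * F1 u (L0 + of_int n * Lq - Lq)
      + (-1) * (bF (W n / q) * Pp (W n / q) * F1 u (L0 + of_int n * Lq)))"
    by (intro bs_add(1) p1 bs_cmult(1) p2)
  then show ?thesis unfolding H1_def W_def by simp
qed

lemma main1:
  assumes g: "gen1 u L0"
  defines "TT u' \<equiv> (\<lambda>n::int. F1 u' (L0 + of_int n * Lq) * Pp (exp (L0 + of_int n * Lq)))"
  shows "bilat_summable (TT u)" "bilat_summable (TT (u - Lq))" "bilat_summable (TT (u + Lq))"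
    "c1x (exp u) * bilat_sum (TT (u - Lq)) + c2x (exp u) * bilat_sum (TT (u + Lq))
      - (c3x (exp u) + E0) * bilat_sum (TT u) = 0"
proof -
  show s0: "bilat_summable (TT u)" unfolding TT_def by (rule T1_summ[OF g])
  show s1: "bilat_summable (TT (u - Lq))" unfolding TT_def by (rule T1_summ) (use gen1_shift[OF g] in auto)
  show s2: "bilat_summable (TT (u + Lq))" unfolding TT_def by (rule T1_summ) (use gen1_shift[OF g] in auto)
  define H where "H n = H1 u (L0 + of_int n * Lq)" for n :: int
  have hs: "bilat_summable H" unfolding H_def by (rule H1_summ[OF g])
  have fe: "c1x (exp u) * TT (u - Lq) n + c2x (exp u) * TT (u + Lq) n + (- (c3x (exp u) + E0)) * TT u n
      = H n - H (n + 1)" for n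
  proof -
    have gl: "gen1 u (L0 + of_int n * Lq)" by (rule gen1_lat[OF g])
    have "H (n + 1) = H1 u (L0 + of_int n * Lq + Lq)" unfolding H_def by (simp add: algebra_simps)
    then show ?thesis using term1[of "L0 + of_int n * Lq" u] gl unfolding gen1_def H_def TT_def
      by (simp add: algebra_simps)
  qed
  have tel: "bilat_sum (\<lambda>n. H n - H (n + 1)) = 0"
    by (rule bs_telescope(2)) (use bs_tendsto[OF hs] in auto)
  have "bilat_sum (\<lambda>n. c1x (exp u) * TT (u - Lq) n + c2x (exp u) * TT (u + Lq) n + (- (c3x (exp u) + E0)) * TT u n)
     = c1x (exp u) * bilat_sum (TT (u - Lq)) + c2x (exp u) * bilat_sum (TT (u + Lq)) + (- (c3x (exp u) + E0)) * bilat_sum (TT u)"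
    using s0 s1 s2 by (simp add: bs_add bs_cmult)
  then have X: "c1x (exp u) * bilat_sum (TT (u - Lq)) + c2x (exp u) * bilat_sum (TT (u + Lq)) + (- (c3x (exp u) + E0)) * bilat_sum (TT u) = 0"
    using tel unfolding fe by simp
  have Y: "c1x (exp u) * bilat_sum (TT (u - Lq)) + c2x (exp u) * bilat_sum (TT (u + Lq))
      - (c3x (exp u) + E0) * bilat_sum (TT u) = c1x (exp u) * bilat_sum (TT (u - Lq)) + c2x (exp u) * bilat_sum (TT (u + Lq)) + (- (c3x (exp u) + E0)) * bilat_sum (TT u)"
    by (simp add: algebra_simps)
  show "c1x (exp u) * bilat_sum (TT (u - Lq)) + c2x (exp u) * bilat_sum (TT (u + Lq))
      - (c3x (exp u) + E0) * bilat_sum (TT u) = 0" unfolding Y by (rule X)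
qed

definition "gen2 u' L0 \<longleftrightarrow> qgeneric q (cC1 * exp L0) \<and> qgeneric q (exp (u' + L0) * q)
     \<and> qgeneric q (cD1 * exp L0) \<and> qgeneric q (cD2 * exp (u' + L0))"

lemma gen2_lat: "gen2 u' L0 \<Longrightarrow> gen2 u' (L0 + of_int n * Lq)"
proof -
  assume g: "gen2 u' L0"
  have e1: "cC1 * exp (L0 + of_int n * Lq) = (cC1 * exp L0) * q powi n"
    "cD1 * exp (L0 + of_int n * Lq) = (cD1 * exp L0) * q powi n"
    "exp (u' + (L0 + of_int n * Lq)) * q = (exp (u' + L0) * q) * q powi n"
    "cD2 * exp (u' + (L0 + of_int n * Lq)) = (cD2 * exp (u' + L0)) * q powi n"
    by (simp_all add: exp_add exp_int_mult[symmetric] algebra_simps)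
  show ?thesis using g q_nz unfolding gen2_def e1 by (simp add: qgen_powi)
qed

lemma gen2_shift: "gen2 u L0 \<Longrightarrow> gen2 (u - Lq) L0 \<and> gen2 (u + Lq) L0"
proof -
  assume g: "gen2 u L0"
  have e1: "exp (u - Lq + L0) * q = (exp (u + L0) * q) / q" "cD2 * exp (u - Lq + L0) = (cD2 * exp (u + L0)) / q"
    "exp (u + Lq + L0) * q = (exp (u + L0) * q) * q" "cD2 * exp (u + Lq + L0) = (cD2 * exp (u + L0)) * q"
    by (simp_all add: exp_add exp_diff algebra_simps)
  from g have g4: "qgeneric q (cC1 * exp L0)" "qgeneric q (exp (u + L0) * q)"
     "qgeneric q (cD1 * exp L0)" "qgeneric q (cD2 * exp (u + L0))" unfolding gen2_def by auto
  show ?thesis unfolding gen2_def e1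
    using g4 qgen_m[OF g4(2) q_nz] qgen_m[OF g4(4) q_nz] by blast
qed

lemma S2': "gen2 u' L0 \<Longrightarrow> - int N - 1 \<le> j \<Longrightarrow> j \<le> 1 \<Longrightarrow>
   bilat_summable (\<lambda>n. F2 u' (L0 + of_int n * Lq) * exp (of_int j * (L0 + of_int n * Lq)))"
  unfolding gen2_def by (rule S2) auto

lemma T2_summ:
  assumes "gen2 u' L0"
  shows "bilat_summable (\<lambda>n. F2 u' (L0 + of_int n * Lq) * Pp (1 / exp (L0 + of_int n * Lq)))"
proof -
  have eq: "F2 u' (L0 + of_int n * Lq) * Pp (1 / exp (L0 + of_int n * Lq))
     = (\<Sum>k\<in>{0..N}. c k * (F2 u' (L0 + of_int n * Lq) * exp (of_int (- int k) * (L0 + of_int n * Lq))))" for n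
  proof -
    have "(1 / exp (L0 + of_int n * Lq)) ^ k = exp (of_int (- int k) * (L0 + of_int n * Lq))" for k
    proof -
      have "(1 / exp (L0 + of_int n * Lq)) ^ k = exp (- (L0 + of_int n * Lq)) ^ k"
        by (simp only: exp_minus inverse_eq_divide)
      also have "\<dots> = exp (of_nat k * (- (L0 + of_int n * Lq)))" by (rule exp_of_nat_mult[symmetric])
      finally show ?thesis by (metis mult_minus_left mult_minus_right of_int_minus of_int_of_nat_eq)
    qed
    then show ?thesis unfolding Pp_def by (simp add: sum_distrib_left mult_ac)
  qed
  show ?thesis unfolding eq
    by (rule bs_sum[THEN conjunct1], rule bs_cmult, rule S2'[OF assms]) auto
qed

lemma H2_summ:
  assumes g: "gen2 u L0"
  shows "bilat_summable (\<lambda>n. H2 u (L0 + of_int n * Lq))"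
proof -
  define W where "W n = 1 / exp (L0 + of_int n * Lq)" for n :: int
  define V where "V n = q / exp (L0 + of_int n * Lq)" for n :: int
  have W0: "W n \<noteq> 0" "V n \<noteq> 0" for n by (simp_all add: W_def V_def)
  have p1: "bilat_summable (\<lambda>n. bF (W n) * Pp (W n) * F2 u (L0 + of_int n * Lq - Lq))"
  proof (rule LPsum[OF bF_lp])
    fix m :: int assume m: "- 1 \<le> m" "m \<le> int N + 1"
    define f where "f n = F2 u (L0 + of_int n * Lq) * exp (of_int (- m) * (L0 + of_int n * Lq))" for n
    have "bilat_summable f" unfolding f_def by (rule S2'[OF g]) (use m in auto)
    then have "bilat_summable (\<lambda>n. exp (- (of_int m * Lq)) * f (n - 1))" by (intro bs_cmult bs_shift_minus)
    moreover have "exp (- (of_int m * Lq)) * f (n - 1) = F2 u (L0 + of_int n * Lq - Lq) * W n powi m" for n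
    proof -
      have "W n = exp (- (L0 + of_int n * Lq))" unfolding W_def by (simp only: exp_minus inverse_eq_divide)
      then have e: "W n powi m = exp (of_int (- m) * (L0 + of_int (n - 1) * Lq) + - (of_int m * Lq))"
        by (simp add: expw_powi algebra_simps)
      show ?thesis unfolding f_def e exp_add by (simp add: mult_ac algebra_simps)
    qed
    ultimately show "bilat_summable (\<lambda>n. F2 u (L0 + of_int n * Lq - Lq) * W n powi m)" by simp
  qed (use W0 in auto)
  have p2: "bilat_summable (\<lambda>n. aF (V n) * Pp (V n) * F2 u (L0 + of_int n * Lq))"
  proof (rule LPsum[OF aF_lp])
    fix m :: int assume m: "- 1 \<le> m" "m \<le> int N + 1"
    define f where "f n = F2 u (L0 + of_int n * Lq) * exp (of_int (- m) * (L0 + of_int n * Lq))" for n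
    have "bilat_summable f" unfolding f_def by (rule S2'[OF g]) (use m in auto)
    then have "bilat_summable (\<lambda>n. exp (of_int m * Lq) * f n)" by (intro bs_cmult)
    moreover have "exp (of_int m * Lq) * f n = F2 u (L0 + of_int n * Lq) * V n powi m" for n
    proof -
      have "V n = exp (Lq - (L0 + of_int n * Lq))" by (simp add: V_def exp_diff)
      then have e: "V n powi m = exp (of_int (- m) * (L0 + of_int n * Lq) + of_int m * Lq)"
        by (simp add: expw_powi algebra_simps)
      show ?thesis unfolding f_def e exp_add by (simp add: mult_ac)
    qed
    ultimately show "bilat_summable (\<lambda>n. F2 u (L0 + of_int n * Lq) * V n powi m)" by simp
  qed (use W0 in auto)
  have "bilat_summable (\<lambda>n. bF (W n) * Pp (W n) * F2 u (L0 + of_int n * Lq - Lq)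
      + (-1) * (aF (V n) * Pp (V n) * F2 u (L0 + of_int n * Lq)))"
    by (intro bs_add(1) p1 bs_cmult(1) p2)
  then show ?thesis unfolding H2_def W_def V_def by simp
qed

lemma main2:
  assumes g: "gen2 u L0"
  defines "TT u' \<equiv> (\<lambda>n::int. F2 u' (L0 + of_int n * Lq) * Pp (1 / exp (L0 + of_int n * Lq)))"
  shows "bilat_summable (TT u)" "bilat_summable (TT (u - Lq))" "bilat_summable (TT (u + Lq))"
    "c1x (exp u) * bilat_sum (TT (u - Lq)) + c2x (exp u) * bilat_sum (TT (u + Lq))
      - (c3x (exp u) + E0) * bilat_sum (TT u) = 0"
proof -
  show s0: "bilat_summable (TT u)" unfolding TT_def by (rule T2_summ[OF g])
  show s1: "bilat_summable (TT (u - Lq))" unfolding TT_def by (rule T2_summ) (use gen2_shift[OF g] in auto)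
  show s2: "bilat_summable (TT (u + Lq))" unfolding TT_def by (rule T2_summ) (use gen2_shift[OF g] in auto)
  define H where "H n = H2 u (L0 + of_int n * Lq)" for n :: int
  have hs: "bilat_summable H" unfolding H_def by (rule H2_summ[OF g])
  have fe: "c1x (exp u) * TT (u - Lq) n + c2x (exp u) * TT (u + Lq) n + (- (c3x (exp u) + E0)) * TT u n
      = H n - H (n + 1)" for n
  proof -
    have gl: "gen2 u (L0 + of_int n * Lq)" by (rule gen2_lat[OF g])
    have "H (n + 1) = H2 u (L0 + of_int n * Lq + Lq)" unfolding H_def by (simp add: algebra_simps)
    then show ?thesis using term2[of "L0 + of_int n * Lq" u] gl unfolding gen2_def H_def TT_def
      by (simp add: algebra_simps)
  qed
  have tel: "bilat_sum (\<lambda>n. H n - H (n + 1)) = 0"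
    by (rule bs_telescope(2)) (use bs_tendsto[OF hs] in auto)
  have "bilat_sum (\<lambda>n. c1x (exp u) * TT (u - Lq) n + c2x (exp u) * TT (u + Lq) n + (- (c3x (exp u) + E0)) * TT u n)
     = c1x (exp u) * bilat_sum (TT (u - Lq)) + c2x (exp u) * bilat_sum (TT (u + Lq)) + (- (c3x (exp u) + E0)) * bilat_sum (TT u)"
    using s0 s1 s2 by (simp add: bs_add bs_cmult)
  then have X: "c1x (exp u) * bilat_sum (TT (u - Lq)) + c2x (exp u) * bilat_sum (TT (u + Lq)) + (- (c3x (exp u) + E0)) * bilat_sum (TT u) = 0"
    using tel unfolding fe by simp
  have Y: "c1x (exp u) * bilat_sum (TT (u - Lq)) + c2x (exp u) * bilat_sum (TT (u + Lq))
      - (c3x (exp u) + E0) * bilat_sum (TT u) = c1x (exp u) * bilat_sum (TT (u - Lq)) + c2x (exp u) * bilat_sum (TT (u + Lq)) + (- (c3x (exp u) + E0)) * bilat_sum (TT u)"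
    by (simp add: algebra_simps)
  show "c1x (exp u) * bilat_sum (TT (u - Lq)) + c2x (exp u) * bilat_sum (TT (u + Lq))
      - (c3x (exp u) + E0) * bilat_sum (TT u) = 0" unfolding Y by (rule X)
qed

end

context S3 begin

lemma qpoch_ratio:
  assumes "qpinf q A1 \<noteq> 0" "qpinf q A2 \<noteq> 0" "qpinf q B1 \<noteq> 0" "qpinf q B2 \<noteq> 0"
    "qpinf q (A1 * q powi n) \<noteq> 0" "qpinf q (A2 * q powi n) \<noteq> 0"
    "qpinf q (B1 * q powi n) \<noteq> 0" "qpinf q (B2 * q powi n) \<noteq> 0"
  shows "qpoch q B1 n * qpoch q B2 n / (qpoch q A1 n * qpoch q A2 n)
    = qpinf q B1 * qpinf q B2 / (qpinf q A1 * qpinf q A2)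
      * (qpinf q (A1 * q powi n) * qpinf q (A2 * q powi n) / (qpinf q (B1 * q powi n) * qpinf q (B2 * q powi n)))"
  unfolding qpoch_def using assms by (simp add: field_simps)

lemma g1_conn:
  assumes g: "gen1 u' (Lxi u')"
  defines "TT \<equiv> (\<lambda>n::int. F1 u' (Lxi u' + of_int n * Lq) * Pp (exp (Lxi u' + of_int n * Lq)))"
  shows "bilat_summable (g1_term Lq t1 t2 h1 l1 l2 a1 a2 b lam1 N Lxi E0 u')"
    "g1 Lq t1 t2 h1 l1 l2 a1 a2 b lam1 N Lxi E0 u' = (1 - q) * bilat_sum TT"
proof -
  define L0 where "L0 = Lxi u'"
  define A1 where "A1 = cA1 * exp L0"
  define A2 where "A2 = QQ * exp (L0 - u')"
  define B1 where "B1 = cB1 * exp L0"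
  define B2 where "B2 = exp (L0 - u')"
  have args: "qpw Lq (- l1 + 1/2) * exp L0 / t1 = A1" "qpw Lq (lam1 + a1) * exp L0 / exp u' = A2"
    "qpw Lq (lam1 - h1 + a1 - 1/2) * exp L0 / t1 = B1" "exp L0 / exp u' = B2"
    by (simp_all add: A1_def A2_def B1_def B2_def cA1_def cB1_def QQ_def exp_diff)
  have gg: "qgeneric q A1" "qgeneric q A2" "qgeneric q B1" "qgeneric q B2"
    using g unfolding gen1_def A1_def A2_def B1_def B2_def L0_def by auto
  have sh: "A1 * q powi n = cA1 * exp (L0 + of_int n * Lq)" "A2 * q powi n = QQ * exp (L0 + of_int n * Lq - u')"
    "B1 * q powi n = cB1 * exp (L0 + of_int n * Lq)" "B2 * q powi n = exp (L0 + of_int n * Lq - u')" for n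
    by (simp_all add: A1_def A2_def B1_def B2_def exp_add exp_diff exp_int_mult[symmetric] algebra_simps)
  have nz: "qpinf q (X * q powi n) \<noteq> 0" if "qgeneric q X" for X n
    using qpinf_nz_gen[OF q_lt1 qgen_powi[OF that q_nz]] .
  have nz0: "qpinf q X \<noteq> 0" if "qgeneric q X" for X
    using qpinf_nz_gen[OF q_lt1 that] .
  define CA where "CA = qpinf q A1 * qpinf q A2"
  define CB where "CB = qpinf q B1 * qpinf q B2"
  have CA0: "CA \<noteq> 0" and CB0: "CB \<noteq> 0" using nz0 gg by (simp_all add: CA_def CB_def)
  have sumeq: "(\<Sum>k = 0..N. qpw Lq ((lam1 + a1 + b + of_nat k) * of_int n) * exp ((lam1 + a1 + b + of_nat k) * L0) * c k)
     = exp (e1c * (L0 + of_int n * Lq)) * Pp (exp (L0 + of_int n * Lq))" for n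
    unfolding Pp_def sum_distrib_left
  proof (rule sum.cong[OF refl])
    fix k assume "k \<in> {0..N}"
    have "qpw Lq ((lam1 + a1 + b + of_nat k) * of_int n) * exp ((lam1 + a1 + b + of_nat k) * L0)
        = exp (e1c * (L0 + of_int n * Lq)) * exp (L0 + of_int n * Lq) ^ k"
      unfolding qpw_def e1c_def exp_of_nat_mult[symmetric] exp_add[symmetric] by (simp add: algebra_simps)
    then show "qpw Lq ((lam1 + a1 + b + of_nat k) * of_int n) * exp ((lam1 + a1 + b + of_nat k) * L0) * c k
        = exp (e1c * (L0 + of_int n * Lq)) * (c k * exp (L0 + of_int n * Lq) ^ k)" by simp
  qed
  have tmq: "g1_term Lq t1 t2 h1 l1 l2 a1 a2 b lam1 N Lxi E0 u' n = (CB / CA * exp (a1 * u')) * TT n" for n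
  proof -
    have "g1_term Lq t1 t2 h1 l1 l2 a1 a2 b lam1 N Lxi E0 u' n
       = qpoch q B1 n * qpoch q B2 n / (qpoch q A1 n * qpoch q A2 n) * (exp (e1c * (L0 + of_int n * Lq)) * Pp (exp (L0 + of_int n * Lq)))"
      unfolding g1_term_def Let_def L0_def[symmetric] args sumeq ..
    also have "\<dots> = CB / CA * (qpinf q (A1 * q powi n) * qpinf q (A2 * q powi n) / (qpinf q (B1 * q powi n) * qpinf q (B2 * q powi n)))
        * (exp (e1c * (L0 + of_int n * Lq)) * Pp (exp (L0 + of_int n * Lq)))"
      unfolding CA_def CB_def by (subst qpoch_ratio) (use nz nz0 gg in auto)
    also have "\<dots> = (CB / CA * exp (a1 * u')) * TT n"
      unfolding TT_def F1_def sh L0_def[symmetric] by (simp add: exp_minus field_simps)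
    finally show ?thesis .
  qed
  have TTs: "bilat_summable TT" unfolding TT_def by (rule T1_summ[OF g])
  show "bilat_summable (g1_term Lq t1 t2 h1 l1 l2 a1 a2 b lam1 N Lxi E0 u')"
    unfolding tmq by (rule bs_cmult(1)[OF TTs])
  have "g1 Lq t1 t2 h1 l1 l2 a1 a2 b lam1 N Lxi E0 u'
     = (1 - q) * exp (- a1 * u') * CA / CB * bilat_sum (g1_term Lq t1 t2 h1 l1 l2 a1 a2 b lam1 N Lxi E0 u')"
    unfolding g1_def Let_def L0_def[symmetric] args CA_def CB_def by simp
  also have "\<dots> = (1 - q) * exp (- a1 * u') * CA / CB * (CB / CA * exp (a1 * u') * bilat_sum TT)"
    unfolding tmq bs_cmult(2)[OF TTs] ..
  also have "\<dots> = (1 - q) * bilat_sum TT"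
    using CA0 CB0 by (simp add: field_simps exp_minus)
  finally show "g1 Lq t1 t2 h1 l1 l2 a1 a2 b lam1 N Lxi E0 u' = (1 - q) * bilat_sum TT" .
qed

lemma g2_conn:
  assumes g: "gen2 u' (- Lxi u')"
  defines "TT \<equiv> (\<lambda>n::int. F2 u' (- Lxi u' + of_int n * Lq) * Pp (1 / exp (- Lxi u' + of_int n * Lq)))"
  shows "bilat_summable (g2_term Lq t1 t2 h1 l1 l2 a1 a2 b lam1 N Lxi E0 u')"
    "g2 Lq t1 t2 h1 l1 l2 a1 a2 b lam1 N Lxi E0 u' = (1 - q) * bilat_sum TT"
proof -
  define M0 where "M0 = - Lxi u'"
  define A1 where "A1 = cC1 * exp M0"
  define A2 where "A2 = exp (u' + M0) * q"
  define B1 where "B1 = cD1 * exp M0"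
  define B2 where "B2 = cD2 * exp (u' + M0)"
  have args: "qpw Lq (- lam1 + h1 - a1 + 3/2) * t1 / exp (Lxi u') = A1" "q * exp u' / exp (Lxi u') = A2"
    "qpw Lq (l1 + 1/2) * t1 / exp (Lxi u') = B1" "qpw Lq (- lam1 - a1 + 1) * exp u' / exp (Lxi u') = B2"
    by (simp_all add: A1_def A2_def B1_def B2_def cC1_def cD1_def cD2_def M0_def exp_add exp_diff exp_minus field_simps)
  have gg: "qgeneric q A1" "qgeneric q A2" "qgeneric q B1" "qgeneric q B2"
    using g unfolding gen2_def A1_def A2_def B1_def B2_def M0_def by auto
  have sh: "A1 * q powi n = cC1 * exp (M0 + of_int n * Lq)" "A2 * q powi n = exp (u' + (M0 + of_int n * Lq)) * q"
    "B1 * q powi n = cD1 * exp (M0 + of_int n * Lq)" "B2 * q powi n = cD2 * exp (u' + (M0 + of_int n * Lq))" for n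
    by (simp_all add: A1_def A2_def B1_def B2_def exp_add exp_int_mult[symmetric] algebra_simps)
  have nz: "qpinf q (X * q powi n) \<noteq> 0" if "qgeneric q X" for X n
    using qpinf_nz_gen[OF q_lt1 qgen_powi[OF that q_nz]] .
  have nz0: "qpinf q X \<noteq> 0" if "qgeneric q X" for X
    using qpinf_nz_gen[OF q_lt1 that] .
  define CA where "CA = qpinf q A1 * qpinf q A2"
  define CB where "CB = qpinf q B1 * qpinf q B2"
  have CA0: "CA \<noteq> 0" and CB0: "CB \<noteq> 0" using nz0 gg by (simp_all add: CA_def CB_def)
  have sumeq: "(\<Sum>k = 0..N. qpw Lq ((lam1 + a2 + of_nat N - of_nat k) * of_int n) * exp ((- lam1 - a2 - of_nat N + of_nat k) * Lxi u') * c k)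
     = exp (e2c * (M0 + of_int n * Lq)) * Pp (1 / exp (M0 + of_int n * Lq))" for n
    unfolding Pp_def sum_distrib_left
  proof (rule sum.cong[OF refl])
    fix k assume "k \<in> {0..N}"
    have p: "(1 / exp (M0 + of_int n * Lq)) ^ k = exp (of_nat k * (- (M0 + of_int n * Lq)))"
    proof -
      have "(1 / exp (M0 + of_int n * Lq)) ^ k = exp (- (M0 + of_int n * Lq)) ^ k"
        by (simp only: exp_minus inverse_eq_divide)
      also have "\<dots> = exp (of_nat k * (- (M0 + of_int n * Lq)))" by (rule exp_of_nat_mult[symmetric])
      finally show ?thesis .
    qed
    have "qpw Lq ((lam1 + a2 + of_nat N - of_nat k) * of_int n) * exp ((- lam1 - a2 - of_nat N + of_nat k) * Lxi u')
        = exp (e2c * (M0 + of_int n * Lq)) * (1 / exp (M0 + of_int n * Lq)) ^ k"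
      unfolding p unfolding qpw_def e2c_def M0_def exp_add[symmetric] by (simp add: algebra_simps)
    then show "qpw Lq ((lam1 + a2 + of_nat N - of_nat k) * of_int n) * exp ((- lam1 - a2 - of_nat N + of_nat k) * Lxi u') * c k
        = exp (e2c * (M0 + of_int n * Lq)) * (c k * (1 / exp (M0 + of_int n * Lq)) ^ k)" by simp
  qed
  have tmq: "g2_term Lq t1 t2 h1 l1 l2 a1 a2 b lam1 N Lxi E0 u' n = (CB / CA * exp (- lam1 * u')) * TT n" for n
  proof -
    have "g2_term Lq t1 t2 h1 l1 l2 a1 a2 b lam1 N Lxi E0 u' n
       = qpoch q B1 n * qpoch q B2 n / (qpoch q A1 n * qpoch q A2 n) * (exp (e2c * (M0 + of_int n * Lq)) * Pp (1 / exp (M0 + of_int n * Lq)))"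
      unfolding g2_term_def Let_def args sumeq ..
    also have "\<dots> = CB / CA * (qpinf q (A1 * q powi n) * qpinf q (A2 * q powi n) / (qpinf q (B1 * q powi n) * qpinf q (B2 * q powi n)))
        * (exp (e2c * (M0 + of_int n * Lq)) * Pp (1 / exp (M0 + of_int n * Lq)))"
      unfolding CA_def CB_def by (subst qpoch_ratio) (use nz nz0 gg in auto)
    also have "\<dots> = (CB / CA * exp (- lam1 * u')) * TT n"
      unfolding TT_def F2_def sh M0_def[symmetric] by (simp add: exp_minus field_simps)
    finally show ?thesis .
  qed
  have TTs: "bilat_summable TT" unfolding TT_def by (rule T2_summ[OF g])
  show "bilat_summable (g2_term Lq t1 t2 h1 l1 l2 a1 a2 b lam1 N Lxi E0 u')"
    unfolding tmq by (rule bs_cmult(1)[OF TTs])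
  have "g2 Lq t1 t2 h1 l1 l2 a1 a2 b lam1 N Lxi E0 u'
     = (1 - q) * exp (lam1 * u') * CA / CB * bilat_sum (g2_term Lq t1 t2 h1 l1 l2 a1 a2 b lam1 N Lxi E0 u')"
    unfolding g2_def Let_def args CA_def CB_def by simp
  also have "\<dots> = (1 - q) * exp (lam1 * u') * CA / CB * (CB / CA * exp (- lam1 * u') * bilat_sum TT)"
    unfolding tmq bs_cmult(2)[OF TTs] ..
  also have "\<dots> = (1 - q) * bilat_sum TT"
    using CA0 CB0 by (simp add: field_simps exp_minus)
  finally show "g2 Lq t1 t2 h1 l1 l2 a1 a2 b lam1 N Lxi E0 u' = (1 - q) * bilat_sum TT" .
qed

end

lemma bs_shift_d:
  assumes "bilat_summable f" "d = 0 \<or> d = (1::int)"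
  shows "bilat_sum (\<lambda>n. f (n - d)) = bilat_sum f" "bilat_sum (\<lambda>n. f (n + d)) = bilat_sum f"
  using assms bs_shift_minus(2)[OF assms(1)] bs_shift_plus(2)[OF assms(1)] by auto

lemma fin_alg:
  fixes C1 C2 C3 E Q Sm Sp S0 :: complex
  assumes "C1 * Sm + C2 * Sp - (C3 + E) * S0 = 0"
  shows "C1 * ((1 - Q) * Sm) + C2 * ((1 - Q) * Sp) - C3 * ((1 - Q) * S0) = E * ((1 - Q) * S0)"
proof -
  have "C1 * ((1 - Q) * Sm) + C2 * ((1 - Q) * Sp) - C3 * ((1 - Q) * S0) - E * ((1 - Q) * S0)
     = (1 - Q) * (C1 * Sm + C2 * Sp - (C3 + E) * S0)" by (simp add: algebra_simps)
  then show ?thesis using assms by simp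
qed

context S3 begin

lemma A4_eq: "A4 Lq t1 t2 h1 h2 l1 l2 a1 a2 b g u = c1x (exp u) * g (u - Lq) + c2x (exp u) * g (u + Lq) - c3x (exp u) * g u"
  unfolding A4_def c1x_def c2x_def c3x_def al1_def al2_def be1_def be2_def kap_def Let_def by simp

end

theorem theorem3p3:
  fixes Lq t1 t2 h1 h2 l1 l2 a1 a2 b lam1 lam2 E0 u :: complex
    and N :: nat
    and Lxi :: "complex \<Rightarrow> complex"
  assumes q_lt1: "cmod (exp Lq) < 1"
    and t_nz: "t1 \<noteq> 0" "t2 \<noteq> 0"
    and h2_def: "h2 = l2 - 1 - of_nat N"
    and lam1_def: "lam1 = (h1 + h2 - l1 - l2 - a1 - a2 - b + 2) / 2"
    and lam2_def: "lam2 = lam1 + b"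
    and real1: "lam2 + a1 \<in> \<real>" "Re (lam2 + a1) > 1"
    and real2: "lam1 + a2 \<in> \<real>" "Re (lam1 + a2) > 1"
    and root: "cpoly Lq t1 t2 h1 l1 l2 a1 a2 b lam1 N E0 = 0"
    and xi_shape: "(\<exists>w. \<forall>v. Lxi v = w) \<or> (\<exists>w. \<forall>v. Lxi v = w + v)"
    and nondeg: "let q = exp Lq; x = exp u; xi = exp (Lxi u) in
        qgeneric q (qpw Lq (- l1 + 1/2) * xi / t1) \<and> qgeneric q (qpw Lq (lam1 + a1) * xi / x)
      \<and> qgeneric q (qpw Lq (lam1 - h1 + a1 - 1/2) * xi / t1) \<and> qgeneric q (xi / x)
      \<and> qgeneric q (qpw Lq (- lam1 + h1 - a1 + 3/2) * t1 / xi) \<and> qgeneric q (q * x / xi)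
      \<and> qgeneric q (qpw Lq (l1 + 1/2) * t1 / xi) \<and> qgeneric q (qpw Lq (- lam1 - a1 + 1) * x / xi)"
  shows "bilat_summable (g1_term Lq t1 t2 h1 l1 l2 a1 a2 b lam1 N Lxi E0 u)
       \<and> bilat_summable (g2_term Lq t1 t2 h1 l1 l2 a1 a2 b lam1 N Lxi E0 u)
       \<and> A4 Lq t1 t2 h1 h2 l1 l2 a1 a2 b (g1 Lq t1 t2 h1 l1 l2 a1 a2 b lam1 N Lxi E0) u
           = E0 * g1 Lq t1 t2 h1 l1 l2 a1 a2 b lam1 N Lxi E0 u
       \<and> A4 Lq t1 t2 h1 h2 l1 l2 a1 a2 b (g2 Lq t1 t2 h1 l1 l2 a1 a2 b lam1 N Lxi E0) u
           = E0 * g2 Lq t1 t2 h1 l1 l2 a1 a2 b lam1 N Lxi E0 u"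
proof -
  interpret S: S3 Lq t1 t2 h1 h2 l1 l2 a1 a2 b lam1 E0 N
    using q_lt1 t_nz h2_def lam1_def real1 real2 root unfolding lam2_def
    by unfold_locales (auto simp: add_ac)
  define L0 where "L0 = Lxi u"
  have nd: "qgeneric (exp Lq) (qpw Lq (- l1 + 1/2) * exp L0 / t1) \<and> qgeneric (exp Lq) (qpw Lq (lam1 + a1) * exp L0 / exp u)
      \<and> qgeneric (exp Lq) (qpw Lq (lam1 - h1 + a1 - 1/2) * exp L0 / t1) \<and> qgeneric (exp Lq) (exp L0 / exp u)
      \<and> qgeneric (exp Lq) (qpw Lq (- lam1 + h1 - a1 + 3/2) * t1 / exp L0) \<and> qgeneric (exp Lq) (exp Lq * exp u / exp L0)
      \<and> qgeneric (exp Lq) (qpw Lq (l1 + 1/2) * t1 / exp L0) \<and> qgeneric (exp Lq) (qpw Lq (- lam1 - a1 + 1) * exp u / exp L0)"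
    using nondeg unfolding Let_def L0_def[symmetric] .
  have gen1: "S.gen1 u L0"
  proof -
    have e: "S.cA1 * exp L0 = qpw Lq (- l1 + 1/2) * exp L0 / t1" "S.QQ * (exp L0 / exp u) = qpw Lq (lam1 + a1) * exp L0 / exp u"
      "S.cB1 * exp L0 = qpw Lq (lam1 - h1 + a1 - 1/2) * exp L0 / t1" "exp (L0 - u) = exp L0 / exp u"
      by (simp_all add: S.cA1_def S.cB1_def S.QQ_def exp_diff)
    show ?thesis unfolding S.gen1_def e(4) unfolding e(1-3) using nd by blast
  qed
  have gen2: "S.gen2 u (- L0)"
  proof -
    have e: "S.cC1 * exp (- L0) = qpw Lq (- lam1 + h1 - a1 + 3/2) * t1 / exp L0" "exp (u + - L0) * exp Lq = exp Lq * exp u / exp L0"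
      "S.cD1 * exp (- L0) = qpw Lq (l1 + 1/2) * t1 / exp L0" "S.cD2 * exp (u + - L0) = qpw Lq (- lam1 - a1 + 1) * exp u / exp L0"
      by (simp_all add: S.cC1_def S.cD1_def S.cD2_def exp_add exp_diff exp_minus field_simps)
    show ?thesis unfolding S.gen2_def e using nd by blast
  qed
  obtain d :: int where d: "d = 0 \<or> d = 1" "Lxi (u - Lq) = L0 - of_int d * Lq" "Lxi (u + Lq) = L0 + of_int d * Lq"
  proof (cases "\<exists>w. \<forall>v. Lxi v = w")
    case True
    then obtain w where "\<forall>v. Lxi v = w" by blast
    then show ?thesis using that[of 0] unfolding L0_def by simp
  next
    case False
    then obtain w where "\<forall>v. Lxi v = w + v" using xi_shape by blast
    then show ?thesis using that[of 1] unfolding L0_def by (simp add: algebra_simps)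
  qed
  have g1m: "S.gen1 (u - Lq) (Lxi (u - Lq))" and g1p: "S.gen1 (u + Lq) (Lxi (u + Lq))"
  proof -
    have a: "Lxi (u - Lq) = L0 + of_int (- d) * Lq" "Lxi (u + Lq) = L0 + of_int d * Lq" using d by simp_all
    show "S.gen1 (u - Lq) (Lxi (u - Lq))" unfolding a(1) by (rule S.gen1_lat) (use S.gen1_shift[OF gen1] in auto)
    show "S.gen1 (u + Lq) (Lxi (u + Lq))" unfolding a(2) by (rule S.gen1_lat) (use S.gen1_shift[OF gen1] in auto)
  qed
  have g2m: "S.gen2 (u - Lq) (- Lxi (u - Lq))" and g2p: "S.gen2 (u + Lq) (- Lxi (u + Lq))"
  proof -
    have a: "- Lxi (u - Lq) = - L0 + of_int d * Lq" "- Lxi (u + Lq) = - L0 + of_int (- d) * Lq" using d by simp_all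
    show "S.gen2 (u - Lq) (- Lxi (u - Lq))" unfolding a(1) by (rule S.gen2_lat) (use S.gen2_shift[OF gen2] in auto)
    show "S.gen2 (u + Lq) (- Lxi (u + Lq))" unfolding a(2) by (rule S.gen2_lat) (use S.gen2_shift[OF gen2] in auto)
  qed
  note M1 = S.main1[OF gen1]
  note M2 = S.main2[OF gen2]
  define f1 where "f1 u' n = S.F1 u' (L0 + of_int n * Lq) * S.Pp (exp (L0 + of_int n * Lq))" for u' and n :: int
  define f2 where "f2 u' n = S.F2 u' (- L0 + of_int n * Lq) * S.Pp (1 / exp (- L0 + of_int n * Lq))" for u' and n :: int
  have G1: "g1 Lq t1 t2 h1 l1 l2 a1 a2 b lam1 N Lxi E0 u = (1 - exp Lq) * bilat_sum (f1 u)"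
    using S.g1_conn(2)[where Lxi=Lxi and u'=u, OF gen1[unfolded L0_def]] unfolding f1_def L0_def .
  have G1m: "g1 Lq t1 t2 h1 l1 l2 a1 a2 b lam1 N Lxi E0 (u - Lq) = (1 - exp Lq) * bilat_sum (f1 (u - Lq))"
  proof -
    have "g1 Lq t1 t2 h1 l1 l2 a1 a2 b lam1 N Lxi E0 (u - Lq) = (1 - exp Lq) * bilat_sum (\<lambda>n. f1 (u - Lq) (n - d))"
      using S.g1_conn(2)[where Lxi=Lxi and u'="u - Lq", OF g1m] unfolding f1_def d(2) by (simp add: algebra_simps)
    then show ?thesis using bs_shift_d(1)[OF M1(2)[folded f1_def] d(1)] by simp
  qed
  have G1p: "g1 Lq t1 t2 h1 l1 l2 a1 a2 b lam1 N Lxi E0 (u + Lq) = (1 - exp Lq) * bilat_sum (f1 (u + Lq))"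
  proof -
    have "g1 Lq t1 t2 h1 l1 l2 a1 a2 b lam1 N Lxi E0 (u + Lq) = (1 - exp Lq) * bilat_sum (\<lambda>n. f1 (u + Lq) (n + d))"
      using S.g1_conn(2)[where Lxi=Lxi and u'="u + Lq", OF g1p] unfolding f1_def d(3) by (simp add: algebra_simps)
    then show ?thesis using bs_shift_d(2)[OF M1(3)[folded f1_def] d(1)] by simp
  qed
  have G2: "g2 Lq t1 t2 h1 l1 l2 a1 a2 b lam1 N Lxi E0 u = (1 - exp Lq) * bilat_sum (f2 u)"
    using S.g2_conn(2)[where Lxi=Lxi and u'=u, OF gen2[unfolded L0_def]] unfolding f2_def L0_def .
  have G2m: "g2 Lq t1 t2 h1 l1 l2 a1 a2 b lam1 N Lxi E0 (u - Lq) = (1 - exp Lq) * bilat_sum (f2 (u - Lq))"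
  proof -
    have "g2 Lq t1 t2 h1 l1 l2 a1 a2 b lam1 N Lxi E0 (u - Lq) = (1 - exp Lq) * bilat_sum (\<lambda>n. f2 (u - Lq) (n + d))"
      using S.g2_conn(2)[where Lxi=Lxi and u'="u - Lq", OF g2m] unfolding f2_def d(2) by (simp add: algebra_simps)
    then show ?thesis using bs_shift_d(2)[OF M2(2)[folded f2_def] d(1)] by simp
  qed
  have G2p: "g2 Lq t1 t2 h1 l1 l2 a1 a2 b lam1 N Lxi E0 (u + Lq) = (1 - exp Lq) * bilat_sum (f2 (u + Lq))"
  proof -
    have "g2 Lq t1 t2 h1 l1 l2 a1 a2 b lam1 N Lxi E0 (u + Lq) = (1 - exp Lq) * bilat_sum (\<lambda>n. f2 (u + Lq) (n - d))"
      using S.g2_conn(2)[where Lxi=Lxi and u'="u + Lq", OF g2p] unfolding f2_def d(3) by (simp add: algebra_simps)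
    then show ?thesis using bs_shift_d(1)[OF M2(3)[folded f2_def] d(1)] by simp
  qed
  have E1: "A4 Lq t1 t2 h1 h2 l1 l2 a1 a2 b (g1 Lq t1 t2 h1 l1 l2 a1 a2 b lam1 N Lxi E0) u
           = E0 * g1 Lq t1 t2 h1 l1 l2 a1 a2 b lam1 N Lxi E0 u"
  proof -
    have z: "S.c1x (exp u) * bilat_sum (f1 (u - Lq)) + S.c2x (exp u) * bilat_sum (f1 (u + Lq))
      - (S.c3x (exp u) + E0) * bilat_sum (f1 u) = 0" using M1(4) unfolding f1_def .
    show ?thesis unfolding S.A4_eq G1 G1m G1p by (rule fin_alg[OF z])
  qed
  have E2: "A4 Lq t1 t2 h1 h2 l1 l2 a1 a2 b (g2 Lq t1 t2 h1 l1 l2 a1 a2 b lam1 N Lxi E0) u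
           = E0 * g2 Lq t1 t2 h1 l1 l2 a1 a2 b lam1 N Lxi E0 u"
  proof -
    have z: "S.c1x (exp u) * bilat_sum (f2 (u - Lq)) + S.c2x (exp u) * bilat_sum (f2 (u + Lq))
      - (S.c3x (exp u) + E0) * bilat_sum (f2 u) = 0" using M2(4) unfolding f2_def .
    show ?thesis unfolding S.A4_eq G2 G2m G2p by (rule fin_alg[OF z])
  qed
  show ?thesis using S.g1_conn(1)[where Lxi=Lxi and u'=u, OF gen1[unfolded L0_def]] S.g2_conn(1)[where Lxi=Lxi and u'=u, OF gen2[unfolded L0_def]] E1 E2 by blast
qed

end
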